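(* Let $\mathcal A$, $\mathcal A_1$, $\mathcal A_2$, $\Pi_1,\Pi_2$ be as in the context, and let $\mathcal B$ be a bialgebra with a nondegenerate pairing $\langle\cdot,\cdot\rangle:\mathcal A\otimes\mathcal B\to\mathbb C$ satisfying $\langle a,b_1b_2\rangle=\langle\Delta(a),b_1\otimes b_2\rangle$ and $\langle a_1a_2,b\rangle=\langle a_2\otimes a_1,\Delta(b)\rangle$. Let $\mathcal R=\sum_\alpha a^\alpha\otimes b_\alpha$ be the canonical tensor of the pairing ($\{a^\alpha\},\{b_\alpha\}$ dual bases). Put $\mathcal R_i=(\Pi_i\otimes\mathrm{id})\mathcal R$, $i=1,2$. Then $\mathcal R=\mathcal R_1\cdot\mathcal R_2$ (product in $\mathcal A\hat\otimes\mathcal B$).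
   Context: $\mathcal A$ is a bialgebra with unit, comultiplication $\Delta$ and counit $\varepsilon$; $\mathcal A_1,\mathcal A_2\subset\mathcal A$ are subalgebras such that multiplication $\mathcal A_1\otimes\mathcal A_2\to\mathcal A$ is a linear isomorphism, $\Delta(\mathcal A_1)\subset\mathcal A\otimes\mathcal A_1$, $\Delta(\mathcal A_2)\subset\mathcal A_2\otimes\mathcal A$; $\Pi_1(a_1a_2)=a_1\varepsilon(a_2)$, $\Pi_2(a_1a_2)=\varepsilon(a_1)a_2$ ($a_i\in\mathcal A_i$). To make dual bases meaningful assume $\mathcal A,\mathcal B$ are graded with finite-dimensional homogeneous components, the pairing is nondegenerate between corresponding components, and tensors are taken in the completed tensor product $\mathcal A\hat\otimes\mathcal B$. Dual bases means $\sum_\alpha\langle a^\alpha,b\rangle b_\alpha=b$ for all $b\in\mathcal B$ and $\sum_\alpha a^\alpha\langle a,b_\alpha\rangle=a$ for all $a\in\mathcal A$. *)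

theory Defs
  imports Complex_Main
begin

text \<open>
A complex vector space with a (homogeneous) basis indexed by a type 'i is
represented by the finitely supported coefficient functions 'i => complex. The tensor product
of spaces with bases indexed by 'i and 'j is the space with basis indexed by 'i * 'j.
Linear maps are given by structure constants on basis vectors.
\<close>

definition fsupp :: "('i \<Rightarrow> complex) \<Rightarrow> bool" where
  "fsupp x \<longleftrightarrow> finite {i. x i \<noteq> 0}"

definition delta :: "'i \<Rightarrow> 'i \<Rightarrow> complex" where
  "delta k = (\<lambda>i. if i = k then 1 else 0)"

definition tensor :: "('i \<Rightarrow> complex) \<Rightarrow> ('j \<Rightarrow> complex) \<Rightarrow> ('i \<times> 'j \<Rightarrow> complex)" where
  "tensor x y = (\<lambda>(i, j). x i * y j)"

text \<open>Multiplication with structure constants m: e_k e_l = sum_i m k l i e_i.\<close>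
definition mulc :: "('i \<Rightarrow> 'i \<Rightarrow> 'i \<Rightarrow> complex) \<Rightarrow> ('i \<Rightarrow> complex) \<Rightarrow> ('i \<Rightarrow> complex) \<Rightarrow> ('i \<Rightarrow> complex)" where
  "mulc m x y = (\<lambda>i. \<Sum>k\<in>{k. x k \<noteq> 0}. \<Sum>l\<in>{l. y l \<noteq> 0}. x k * y l * m k l i)"

definition mult_map :: "('i \<Rightarrow> 'i \<Rightarrow> 'i \<Rightarrow> complex) \<Rightarrow> ('i \<times> 'i \<Rightarrow> complex) \<Rightarrow> ('i \<Rightarrow> complex)" where
  "mult_map m t = (\<lambda>i. \<Sum>p\<in>{p. t p \<noteq> 0}. t p * m (fst p) (snd p) i)"

text \<open>Product in A (x) A: (x (x) y)(x' (x) y') = x x' (x) y y'.\<close>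
definition mul2 :: "('i \<Rightarrow> 'i \<Rightarrow> 'i \<Rightarrow> complex) \<Rightarrow> ('i \<times> 'i \<Rightarrow> complex) \<Rightarrow> ('i \<times> 'i \<Rightarrow> complex) \<Rightarrow> ('i \<times> 'i \<Rightarrow> complex)" where
  "mul2 m t s = (\<lambda>(i, j). \<Sum>p\<in>{p. t p \<noteq> 0}. \<Sum>q\<in>{q. s q \<noteq> 0}.
       t p * s q * m (fst p) (fst q) i * m (snd p) (snd q) j)"

text \<open>Coproduct with structure constants d: Delta(e_i) = sum_{k,l} d i k l e_k (x) e_l.\<close>
definition comulc :: "('i \<Rightarrow> 'i \<Rightarrow> 'i \<Rightarrow> complex) \<Rightarrow> ('i \<Rightarrow> complex) \<Rightarrow> ('i \<times> 'i \<Rightarrow> complex)" where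
  "comulc d x = (\<lambda>(k, l). \<Sum>i\<in>{i. x i \<noteq> 0}. x i * d i k l)"

definition counitc :: "('i \<Rightarrow> complex) \<Rightarrow> ('i \<Rightarrow> complex) \<Rightarrow> complex" where
  "counitc e x = (\<Sum>i\<in>{i. x i \<noteq> 0}. x i * e i)"

definition id_eps :: "('i \<Rightarrow> complex) \<Rightarrow> ('i \<times> 'i \<Rightarrow> complex) \<Rightarrow> ('i \<Rightarrow> complex)" where
  "id_eps e t = (\<lambda>i. \<Sum>l\<in>{l. t (i, l) \<noteq> 0}. t (i, l) * e l)"

definition eps_id :: "('i \<Rightarrow> complex) \<Rightarrow> ('i \<times> 'i \<Rightarrow> complex) \<Rightarrow> ('i \<Rightarrow> complex)" where
  "eps_id e t = (\<lambda>l. \<Sum>i\<in>{i. t (i, l) \<noteq> 0}. e i * t (i, l))"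

definition comul_id :: "('i \<Rightarrow> 'i \<Rightarrow> 'i \<Rightarrow> complex) \<Rightarrow> ('i \<times> 'i \<Rightarrow> complex) \<Rightarrow> ('i \<times> 'i \<times> 'i \<Rightarrow> complex)" where
  "comul_id d t = (\<lambda>(a, b, c). \<Sum>k\<in>{k. t (k, c) \<noteq> 0}. t (k, c) * d k a b)"

definition id_comul :: "('i \<Rightarrow> 'i \<Rightarrow> 'i \<Rightarrow> complex) \<Rightarrow> ('i \<times> 'i \<Rightarrow> complex) \<Rightarrow> ('i \<times> 'i \<times> 'i \<Rightarrow> complex)" where
  "id_comul d t = (\<lambda>(a, b, c). \<Sum>k\<in>{k. t (a, k) \<noteq> 0}. t (a, k) * d k b c)"

text \<open>A graded bialgebra (over the complex numbers) with finite-dimensional homogeneous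
components, given by a homogeneous basis indexed by 'i with degree function deg, and
structure constants m (product), u (unit), d (coproduct), e (counit).\<close>
definition graded_bialgebra ::
  "('i \<Rightarrow> nat) \<Rightarrow> ('i \<Rightarrow> 'i \<Rightarrow> 'i \<Rightarrow> complex) \<Rightarrow> ('i \<Rightarrow> complex) \<Rightarrow>
   ('i \<Rightarrow> 'i \<Rightarrow> 'i \<Rightarrow> complex) \<Rightarrow> ('i \<Rightarrow> complex) \<Rightarrow> bool" where
  "graded_bialgebra deg m u d e \<longleftrightarrow>
     (\<forall>n. finite {i. deg i = n}) \<and>
     (\<forall>k l i. m k l i \<noteq> 0 \<longrightarrow> deg i = deg k + deg l) \<and>
     (\<forall>i. u i \<noteq> 0 \<longrightarrow> deg i = 0) \<and>
     (\<forall>i k l. d i k l \<noteq> 0 \<longrightarrow> deg i = deg k + deg l) \<and>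
     (\<forall>i. e i \<noteq> 0 \<longrightarrow> deg i = 0) \<and>
     (\<forall>x y z. fsupp x \<longrightarrow> fsupp y \<longrightarrow> fsupp z \<longrightarrow>
        mulc m (mulc m x y) z = mulc m x (mulc m y z)) \<and>
     (\<forall>x. fsupp x \<longrightarrow> mulc m u x = x \<and> mulc m x u = x) \<and>
     (\<forall>x. fsupp x \<longrightarrow> comul_id d (comulc d x) = id_comul d (comulc d x)) \<and>
     (\<forall>x. fsupp x \<longrightarrow> id_eps e (comulc d x) = x \<and> eps_id e (comulc d x) = x) \<and>
     (\<forall>x y. fsupp x \<longrightarrow> fsupp y \<longrightarrow>
        comulc d (mulc m x y) = mul2 m (comulc d x) (comulc d y)) \<and>
     comulc d u = tensor u u \<and>
     (\<forall>x y. fsupp x \<longrightarrow> fsupp y \<longrightarrow>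
        counitc e (mulc m x y) = counitc e x * counitc e y) \<and>
     counitc e u = 1"

definition homog :: "('i \<Rightarrow> nat) \<Rightarrow> nat \<Rightarrow> ('i \<Rightarrow> complex) \<Rightarrow> bool" where
  "homog deg n x \<longleftrightarrow> (\<forall>i. x i \<noteq> 0 \<longrightarrow> deg i = n)"

definition pairing :: "('i \<Rightarrow> 'j \<Rightarrow> complex) \<Rightarrow> ('i \<Rightarrow> complex) \<Rightarrow> ('j \<Rightarrow> complex) \<Rightarrow> complex" where
  "pairing pr x y = (\<Sum>i\<in>{i. x i \<noteq> 0}. \<Sum>j\<in>{j. y j \<noteq> 0}. x i * y j * pr i j)"

definition pairing2 :: "('i \<Rightarrow> 'j \<Rightarrow> complex) \<Rightarrow> ('i \<times> 'i \<Rightarrow> complex) \<Rightarrow> ('j \<times> 'j \<Rightarrow> complex) \<Rightarrow> complex" where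
  "pairing2 pr t s = (\<Sum>p\<in>{p. t p \<noteq> 0}. \<Sum>q\<in>{q. s q \<noteq> 0}.
       t p * s q * pr (fst p) (fst q) * pr (snd p) (snd q))"

definition graded_nondeg_pairing :: "('i \<Rightarrow> nat) \<Rightarrow> ('j \<Rightarrow> nat) \<Rightarrow> ('i \<Rightarrow> 'j \<Rightarrow> complex) \<Rightarrow> bool" where
  "graded_nondeg_pairing degA degB pr \<longleftrightarrow>
     (\<forall>i j. pr i j \<noteq> 0 \<longrightarrow> degA i = degB j) \<and>
     (\<forall>n x. fsupp x \<longrightarrow> homog degA n x \<longrightarrow>
        (\<forall>y. fsupp y \<longrightarrow> homog degB n y \<longrightarrow> pairing pr x y = 0) \<longrightarrow> x = (\<lambda>_. 0)) \<and>
     (\<forall>n y. fsupp y \<longrightarrow> homog degB n y \<longrightarrow>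
        (\<forall>x. fsupp x \<longrightarrow> homog degA n x \<longrightarrow> pairing pr x y = 0) \<longrightarrow> y = (\<lambda>_. 0))"

definition csubspace :: "('i \<Rightarrow> complex) set \<Rightarrow> bool" where
  "csubspace S \<longleftrightarrow> S \<subseteq> {x. fsupp x} \<and> (\<lambda>_. 0) \<in> S \<and>
     (\<forall>x\<in>S. \<forall>y\<in>S. (\<lambda>i. x i + y i) \<in> S) \<and> (\<forall>c. \<forall>x\<in>S. (\<lambda>i. c * x i) \<in> S)"

definition subalgebra :: "('i \<Rightarrow> 'i \<Rightarrow> 'i \<Rightarrow> complex) \<Rightarrow> ('i \<Rightarrow> complex) \<Rightarrow> ('i \<Rightarrow> complex) set \<Rightarrow> bool" where
  "subalgebra m u S \<longleftrightarrow> csubspace S \<and> u \<in> S \<and> (\<forall>x\<in>S. \<forall>y\<in>S. mulc m x y \<in> S)"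

definition tspan :: "('i \<Rightarrow> complex) set \<Rightarrow> ('j \<Rightarrow> complex) set \<Rightarrow> ('i \<times> 'j \<Rightarrow> complex) set" where
  "tspan S T = {t. \<exists>(n::nat) x y. (\<forall>k<n. x k \<in> S \<and> y k \<in> T) \<and>
                        t = (\<lambda>p. \<Sum>k<n. tensor (x k) (y k) p)}"

text \<open>Pi_1 = (id (x) eps) o mu^{-1} and Pi_2 = (eps (x) id) o mu^{-1}, where
mu : A_1 (x) A_2 -> A is the multiplication isomorphism; so Pi_1(a1 a2) = a1 eps(a2) and
Pi_2(a1 a2) = eps(a1) a2.\<close>
definition Pi1 :: "('i \<Rightarrow> 'i \<Rightarrow> 'i \<Rightarrow> complex) \<Rightarrow> ('i \<Rightarrow> complex) \<Rightarrow> ('i \<Rightarrow> complex) set \<Rightarrow>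
    ('i \<Rightarrow> complex) set \<Rightarrow> ('i \<Rightarrow> complex) \<Rightarrow> ('i \<Rightarrow> complex)" where
  "Pi1 m e A1 A2 x = id_eps e (THE t. t \<in> tspan A1 A2 \<and> mult_map m t = x)"

definition Pi2 :: "('i \<Rightarrow> 'i \<Rightarrow> 'i \<Rightarrow> complex) \<Rightarrow> ('i \<Rightarrow> complex) \<Rightarrow> ('i \<Rightarrow> complex) set \<Rightarrow>
    ('i \<Rightarrow> complex) set \<Rightarrow> ('i \<Rightarrow> complex) \<Rightarrow> ('i \<Rightarrow> complex)" where
  "Pi2 m e A1 A2 x = eps_id e (THE t. t \<in> tspan A1 A2 \<and> mult_map m t = x)"

text \<open>Dual bases {a^alpha}, {b_alpha} (homogeneous, alpha of degree dk alpha,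
finitely many of each degree), in the sense:
sum_alpha <a^alpha, b> b_alpha = b and sum_alpha a^alpha <a, b_alpha> = a.\<close>
definition dual_bases :: "('i \<Rightarrow> nat) \<Rightarrow> ('j \<Rightarrow> nat) \<Rightarrow> ('i \<Rightarrow> 'j \<Rightarrow> complex) \<Rightarrow>
    ('k \<Rightarrow> nat) \<Rightarrow> ('k \<Rightarrow> 'i \<Rightarrow> complex) \<Rightarrow> ('k \<Rightarrow> 'j \<Rightarrow> complex) \<Rightarrow> bool" where
  "dual_bases degA degB pr dk a b \<longleftrightarrow>
     (\<forall>n. finite {\<alpha>. dk \<alpha> = n}) \<and>
     (\<forall>\<alpha>. fsupp (a \<alpha>) \<and> homog degA (dk \<alpha>) (a \<alpha>)) \<and>
     (\<forall>\<alpha>. fsupp (b \<alpha>) \<and> homog degB (dk \<alpha>) (b \<alpha>)) \<and>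
     (\<forall>y. fsupp y \<longrightarrow>
        (\<lambda>j. \<Sum>\<alpha>\<in>{\<alpha>. pairing pr (a \<alpha>) y \<noteq> 0}. pairing pr (a \<alpha>) y * b \<alpha> j) = y) \<and>
     (\<forall>x. fsupp x \<longrightarrow>
        (\<lambda>i. \<Sum>\<alpha>\<in>{\<alpha>. pairing pr x (b \<alpha>) \<noteq> 0}. a \<alpha> i * pairing pr x (b \<alpha>)) = x)"

text \<open>Completed tensor product: with homogeneous bases, the completed tensor product
prod_{m,n} A_m (x) B_n is the space of all functions 'i * 'j => complex.\<close>
definition canon :: "('k \<Rightarrow> 'i \<Rightarrow> complex) \<Rightarrow> ('k \<Rightarrow> 'j \<Rightarrow> complex) \<Rightarrow> ('i \<times> 'j \<Rightarrow> complex)" where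
  "canon a b = (\<lambda>(i, j). \<Sum>\<alpha>\<in>{\<alpha>. a \<alpha> i * b \<alpha> j \<noteq> 0}. a \<alpha> i * b \<alpha> j)"

text \<open>(f (x) id) applied to an element of the completed tensor product (f linear on A,
given by its values on basis vectors).\<close>
definition map_left :: "(('i \<Rightarrow> complex) \<Rightarrow> ('i \<Rightarrow> complex)) \<Rightarrow> ('i \<times> 'j \<Rightarrow> complex) \<Rightarrow> ('i \<times> 'j \<Rightarrow> complex)" where
  "map_left f X = (\<lambda>(i, j). \<Sum>k\<in>{k. X (k, j) \<noteq> 0}. f (delta k) i * X (k, j))"

text \<open>Product in the completed tensor product: (x (x) y)(x' (x) y') = x x' (x) y y'.
The sums are finite since the products of A and B are graded.\<close>
definition cmul :: "('i \<Rightarrow> 'i \<Rightarrow> 'i \<Rightarrow> complex) \<Rightarrow> ('j \<Rightarrow> 'j \<Rightarrow> 'j \<Rightarrow> complex) \<Rightarrow>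
    ('i \<times> 'j \<Rightarrow> complex) \<Rightarrow> ('i \<times> 'j \<Rightarrow> complex) \<Rightarrow> ('i \<times> 'j \<Rightarrow> complex)" where
  "cmul mA mB X Y = (\<lambda>(i, j).
     \<Sum>p\<in>{p. mA (fst p) (snd p) i \<noteq> 0}. \<Sum>q\<in>{q. mB (fst q) (snd q) j \<noteq> 0}.
       X (fst p, fst q) * Y (snd p, snd q) * mA (fst p) (snd p) i * mB (fst q) (snd q) j)"

end

theory Submission
  imports Defs "HOL-Library.Groups_Big_Fun"
begin

definition lc :: "'f set \<Rightarrow> ('f \<Rightarrow> complex) \<Rightarrow> ('f \<Rightarrow> 'x \<Rightarrow> complex) \<Rightarrow> 'x \<Rightarrow> complex" where
  "lc F c x = (\<lambda>i. \<Sum>f\<in>F. c f * x f i)"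

lemma SA_eq:
  assumes "finite A" "\<And>x. g x \<noteq> 0 \<Longrightarrow> x \<in> A"
  shows "Sum_any g = sum g A"
  using Sum_any.expand_superset[of A g] assms by blast

lemma supp_SA:
  fixes x h :: "'a \<Rightarrow> complex"
  assumes "finite {k. x k \<noteq> 0}"
  shows "(\<Sum>k\<in>{k. x k \<noteq> 0}. x k * h k) = Sum_any (\<lambda>k. x k * h k)"
  by (rule SA_eq[symmetric]) (use assms in \<open>auto simp: mult_eq_0_iff\<close>)

lemma SA_sum:
  assumes "finite F" "\<And>f. f \<in> F \<Longrightarrow> finite {x. g f x \<noteq> 0}"
  shows "Sum_any (\<lambda>x. \<Sum>f\<in>F. g f x) = (\<Sum>f\<in>F. Sum_any (g f))"
proof -
  let ?U = "\<Union>f\<in>F. {x. g f x \<noteq> 0}"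
  have fU: "finite ?U" using assms by auto
  have "Sum_any (\<lambda>x. \<Sum>f\<in>F. g f x) = (\<Sum>x\<in>?U. \<Sum>f\<in>F. g f x)"
    by (rule SA_eq[OF fU]) (auto elim: sum.not_neutral_contains_not_neutral)
  also have "\<dots> = (\<Sum>f\<in>F. \<Sum>x\<in>?U. g f x)" by (rule sum.swap)
  also have "\<dots> = (\<Sum>f\<in>F. Sum_any (g f))"
    by (rule sum.cong[OF refl], rule SA_eq[symmetric, OF fU]) blast
  finally show ?thesis .
qed

lemma KL:
  assumes "finite F" "\<And>f. f \<in> F \<Longrightarrow> fsupp (x f)"
  shows "Sum_any (\<lambda>k. lc F c x k * K k) = (\<Sum>f\<in>F. c f * Sum_any (\<lambda>k. x f k * K k))"
proof -
  have "Sum_any (\<lambda>k. lc F c x k * K k) = Sum_any (\<lambda>k. \<Sum>f\<in>F. c f * (x f k * K k))"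
    by (simp add: lc_def sum_distrib_right mult.assoc)
  also have "\<dots> = (\<Sum>f\<in>F. Sum_any (\<lambda>k. c f * (x f k * K k)))"
    apply (rule SA_sum[OF assms(1)])
    subgoal for f using assms(2)[of f] unfolding fsupp_def
      by (rule rev_finite_subset) auto
    done
  also have "\<dots> = (\<Sum>f\<in>F. c f * Sum_any (\<lambda>k. x f k * K k))"
    apply (rule sum.cong[OF refl])
    apply (rule Sum_any_right_distrib[symmetric])
    subgoal for f using assms(2)[of f] unfolding fsupp_def
      by (rule rev_finite_subset) auto
    done
  finally show ?thesis .
qed

lemma SA_pair:
  fixes f :: "'a \<Rightarrow> complex" and g :: "'b \<Rightarrow> complex"
  assumes "finite {k. f k \<noteq> 0}" "finite {k. g k \<noteq> 0}"
  shows "Sum_any (\<lambda>p. f (fst p) * g (snd p)) = Sum_any f * Sum_any g"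
proof -
  have "Sum_any (\<lambda>p. f (fst p) * g (snd p)) = (\<Sum>p\<in>{k. f k \<noteq> 0} \<times> {k. g k \<noteq> 0}. f (fst p) * g (snd p))"
    by (rule SA_eq) (use assms in auto)
  also have "\<dots> = sum f {k. f k \<noteq> 0} * sum g {k. g k \<noteq> 0}"
    by (simp add: sum_product sum.cartesian_product split_def)
  also have "\<dots> = Sum_any f * Sum_any g"
    by (simp add: Sum_any.expand_set)
  finally show ?thesis .
qed

lemma SA_nest:
  fixes g :: "'a \<Rightarrow> 'b \<Rightarrow> complex"
  assumes "finite A" "finite B" "\<And>x y. g x y \<noteq> 0 \<Longrightarrow> x \<in> A \<and> y \<in> B"
  shows "Sum_any (\<lambda>x. Sum_any (\<lambda>y. g x y)) = Sum_any (\<lambda>p. g (fst p) (snd p))"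
proof -
  have "Sum_any (\<lambda>x. Sum_any (\<lambda>y. g x y)) = (\<Sum>x\<in>A. \<Sum>y\<in>B. g x y)"
    apply (subst SA_eq[OF assms(2)]) using assms(3) apply blast
    apply (rule SA_eq[OF assms(1)]) using assms(3) 
    by (auto elim: sum.not_neutral_contains_not_neutral)
  also have "\<dots> = (\<Sum>p\<in>A\<times>B. g (fst p) (snd p))" by (simp add: sum.cartesian_product split_def)
  also have "\<dots> = Sum_any (\<lambda>p. g (fst p) (snd p))"
    by (rule SA_eq[symmetric]) (use assms in auto)
  finally show ?thesis .
qed

lemma SA_swap:
  fixes g :: "'a \<Rightarrow> 'b \<Rightarrow> complex"
  assumes "finite A" "finite B" "\<And>x y. g x y \<noteq> 0 \<Longrightarrow> x \<in> A \<and> y \<in> B"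
  shows "Sum_any (\<lambda>x. Sum_any (\<lambda>y. g x y)) = Sum_any (\<lambda>y. Sum_any (\<lambda>x. g x y))"
proof -
  have "Sum_any (\<lambda>x. Sum_any (\<lambda>y. g x y)) = (\<Sum>x\<in>A. \<Sum>y\<in>B. g x y)"
    apply (subst SA_eq[OF assms(2)]) using assms(3) apply blast
    apply (rule SA_eq[OF assms(1)]) using assms(3) 
    by (auto elim: sum.not_neutral_contains_not_neutral)
  also have "\<dots> = (\<Sum>y\<in>B. \<Sum>x\<in>A. g x y)" by (rule sum.swap)
  also have "\<dots> = Sum_any (\<lambda>y. Sum_any (\<lambda>x. g x y))"
    apply (subst SA_eq[OF assms(1), of "\<lambda>x. g x _"]) using assms(3) apply blast
    apply (rule SA_eq[symmetric, OF assms(2)]) using assms(3) 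
    by (auto elim: sum.not_neutral_contains_not_neutral)
  finally show ?thesis .
qed

lemma fs_zero[simp]: "fsupp (\<lambda>_. 0)" by (simp add: fsupp_def)
lemma fs_delta[simp]: "fsupp (delta k)" by (simp add: fsupp_def delta_def)
lemma fs_tensor: "fsupp x \<Longrightarrow> fsupp y \<Longrightarrow> fsupp (tensor x y)"
  unfolding fsupp_def tensor_def
  by (rule rev_finite_subset[of "{i. x i \<noteq> 0} \<times> {j. y j \<noteq> 0}"]) auto
lemma fs_row: "fsupp t \<Longrightarrow> finite {l. t (i,l) \<noteq> 0}"
  unfolding fsupp_def
  by (rule rev_finite_subset[of "snd ` {p. t p \<noteq> 0}"]) force+
lemma fs_col: "fsupp t \<Longrightarrow> finite {i. t (i,l) \<noteq> 0}"
  unfolding fsupp_def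
  by (rule rev_finite_subset[of "fst ` {p. t p \<noteq> 0}"]) force+
lemma fs_add: "fsupp x \<Longrightarrow> fsupp y \<Longrightarrow> fsupp (\<lambda>i. x i + y i)"
  unfolding fsupp_def
  by (rule rev_finite_subset[of "{i. x i \<noteq> 0} \<union> {i. y i \<noteq> 0}"]) auto
lemma fs_scale: "fsupp x \<Longrightarrow> fsupp (\<lambda>i. c * x i)"
  unfolding fsupp_def
  by (rule rev_finite_subset[of "{i. x i \<noteq> 0}"]) auto
lemma fs_sum: "finite F \<Longrightarrow> (\<And>f. f \<in> F \<Longrightarrow> fsupp (x f)) \<Longrightarrow> fsupp (\<lambda>i. \<Sum>f\<in>F. x f i)"
  unfolding fsupp_def
  by (rule rev_finite_subset[of "\<Union>f\<in>F. {i. x f i \<noteq> 0}"])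
     (auto elim: sum.not_neutral_contains_not_neutral)

lemma fs_lc: "finite F \<Longrightarrow> (\<And>f. f \<in> F \<Longrightarrow> fsupp (x f)) \<Longrightarrow> fsupp (lc F c x)"
  unfolding lc_def by (rule fs_sum) (auto intro: fs_scale)

lemma fs_fin: "fsupp x \<Longrightarrow> finite {i. x i \<noteq> 0}" by (simp add: fsupp_def)

lemma lc_supp_delta:
  assumes "fsupp x" "finite K" "{k. x k \<noteq> 0} \<subseteq> K"
  shows "lc K x delta = x"
proof
  fix i
  have "lc K x delta i = (\<Sum>k\<in>K. x k * delta k i)" by (simp add: lc_def)
  also have "\<dots> = (\<Sum>k\<in>K. if k = i then x k else 0)"
    by (rule sum.cong) (auto simp: delta_def)
  also have "\<dots> = x i" using assms by (auto simp: sum.delta)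
  finally show "lc K x delta i = x i" .
qed

lemma gb_fin: "graded_bialgebra deg m u d e \<Longrightarrow> finite {i. deg i = n}"
  by (simp add: graded_bialgebra_def)
lemma gb_m: "graded_bialgebra deg m u d e \<Longrightarrow> m k l i \<noteq> 0 \<Longrightarrow> deg i = deg k + deg l"
  by (simp add: graded_bialgebra_def)
lemma gb_d: "graded_bialgebra deg m u d e \<Longrightarrow> d i k l \<noteq> 0 \<Longrightarrow> deg i = deg k + deg l"
  by (simp add: graded_bialgebra_def)
lemma gb_fin_le: "graded_bialgebra deg m u d e \<Longrightarrow> finite {i. deg i \<le> n}"
proof -
  assume g: "graded_bialgebra deg m u d e"
  have "{i. deg i \<le> n} = (\<Union>k\<in>{..n}. {i. deg i = k})" by auto
  thus ?thesis using gb_fin[OF g] by auto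
qed
lemma gb_fin_mset: "graded_bialgebra deg m u d e \<Longrightarrow> finite {p. m (fst p) (snd p) i \<noteq> 0}"
  apply (rule rev_finite_subset[of "{k. deg k \<le> deg i} \<times> {k. deg k \<le> deg i}"])
   apply (simp add: gb_fin_le)
  apply (auto dest: gb_m)
  done

lemma mulc_SA:
  assumes "fsupp x" "fsupp y"
  shows "mulc m x y i = Sum_any (\<lambda>k. x k * Sum_any (\<lambda>l. y l * m k l i))"
proof -
  have "mulc m x y i = (\<Sum>k\<in>{k. x k \<noteq> 0}. x k * (\<Sum>l\<in>{l. y l \<noteq> 0}. y l * m k l i))"
    by (simp add: mulc_def sum_distrib_left mult.assoc)
  also have "\<dots> = (\<Sum>k\<in>{k. x k \<noteq> 0}. x k * Sum_any (\<lambda>l. y l * m k l i))"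
    using supp_SA[OF fs_fin[OF assms(2)]] by simp
  also have "\<dots> = Sum_any (\<lambda>k. x k * Sum_any (\<lambda>l. y l * m k l i))"
    by (rule supp_SA[OF fs_fin[OF assms(1)]])
  finally show ?thesis .
qed

lemma mulc_SA':
  assumes "fsupp x" "fsupp y"
  shows "mulc m x y i = Sum_any (\<lambda>l. y l * Sum_any (\<lambda>k. x k * m k l i))"
proof -
  have "mulc m x y i = Sum_any (\<lambda>k. Sum_any (\<lambda>l. x k * y l * m k l i))"
    unfolding mulc_SA[OF assms]
    by (rule Sum_any.cong, subst Sum_any_right_distrib) (auto simp: mult.assoc intro: rev_finite_subset[OF fs_fin[OF assms(2)]])
  also have "\<dots> = Sum_any (\<lambda>l. Sum_any (\<lambda>k. x k * y l * m k l i))"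
    by (rule SA_swap[OF fs_fin[OF assms(1)] fs_fin[OF assms(2)]]) auto
  also have "\<dots> = Sum_any (\<lambda>l. y l * Sum_any (\<lambda>k. x k * m k l i))"
    by (rule Sum_any.cong, subst Sum_any_right_distrib) (auto simp: mult.assoc mult.left_commute intro: rev_finite_subset[OF fs_fin[OF assms(1)]])
  finally show ?thesis .
qed

lemma mulc_fs:
  assumes g: "graded_bialgebra deg m u d e" and "fsupp x" "fsupp y"
  shows "fsupp (mulc m x y)"
  unfolding fsupp_def
proof (rule rev_finite_subset)
  let ?D = "deg ` {k. x k \<noteq> 0} \<times> deg ` {l. y l \<noteq> 0}"
  show "finite (\<Union>p\<in>?D. {i. deg i = fst p + snd p})"
    using assms(2,3) gb_fin[OF g] by (auto simp: fsupp_def)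
  show "{i. mulc m x y i \<noteq> 0} \<subseteq> (\<Union>p\<in>?D. {i. deg i = fst p + snd p})"
  proof
    fix i assume "i \<in> {i. mulc m x y i \<noteq> 0}"
    then obtain k l where "x k \<noteq> 0" "y l \<noteq> 0" "m k l i \<noteq> 0"
      unfolding mulc_def by (auto elim!: sum.not_neutral_contains_not_neutral)
    thus "i \<in> (\<Union>p\<in>?D. {i. deg i = fst p + snd p})" using gb_m[OF g] by force
  qed
qed

lemma comulc_SA: "fsupp x \<Longrightarrow> comulc d x p = Sum_any (\<lambda>i. x i * d i (fst p) (snd p))"
  by (cases p) (simp add: comulc_def supp_SA fs_fin)

lemma comulc_fs:
  assumes g: "graded_bialgebra deg m u d e" and "fsupp x"
  shows "fsupp (comulc d x)"
  unfolding fsupp_def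
proof (rule rev_finite_subset)
  let ?D = "deg ` {k. x k \<noteq> 0}"
  show "finite (\<Union>n\<in>?D. {i. deg i \<le> n} \<times> {i. deg i \<le> n})"
    using assms(2) gb_fin_le[OF g] by (auto simp: fsupp_def)
  show "{p. comulc d x p \<noteq> 0} \<subseteq> (\<Union>n\<in>?D. {i. deg i \<le> n} \<times> {i. deg i \<le> n})"
  proof
    fix p assume "p \<in> {p. comulc d x p \<noteq> 0}"
    then obtain i where "x i \<noteq> 0" "d i (fst p) (snd p) \<noteq> 0"
      unfolding comulc_def by (cases p) (auto elim!: sum.not_neutral_contains_not_neutral)
    thus "p \<in> (\<Union>n\<in>?D. {i. deg i \<le> n} \<times> {i. deg i \<le> n})" using gb_d[OF g] 
      by (cases p) force
  qed
qed

lemma counitc_SA: "fsupp x \<Longrightarrow> counitc e x = Sum_any (\<lambda>i. x i * e i)"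
  by (simp add: counitc_def supp_SA fs_fin)
lemma id_eps_SA: "fsupp t \<Longrightarrow> id_eps e t i = Sum_any (\<lambda>l. t (i,l) * e l)"
  by (simp add: id_eps_def supp_SA fs_row)
lemma eps_id_SA: "fsupp t \<Longrightarrow> eps_id e t l = Sum_any (\<lambda>i. t (i,l) * e i)"
  unfolding eps_id_def by (subst mult.commute) (simp add: fs_col supp_SA)
lemma mult_map_SA: "fsupp t \<Longrightarrow> mult_map m t i = Sum_any (\<lambda>p. t p * m (fst p) (snd p) i)"
  by (simp add: mult_map_def supp_SA fs_fin)
lemma pairing_SA:
  assumes "fsupp x" "fsupp y"
  shows "pairing pr x y = Sum_any (\<lambda>i. x i * Sum_any (\<lambda>j. y j * pr i j))"
proof -
  have "pairing pr x y = (\<Sum>k\<in>{k. x k \<noteq> 0}. x k * (\<Sum>l\<in>{l. y l \<noteq> 0}. y l * pr k l))"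
    by (simp add: pairing_def sum_distrib_left mult.assoc)
  also have "\<dots> = (\<Sum>k\<in>{k. x k \<noteq> 0}. x k * Sum_any (\<lambda>l. y l * pr k l))"
    using supp_SA[OF fs_fin[OF assms(2)]] by simp
  also have "\<dots> = Sum_any (\<lambda>k. x k * Sum_any (\<lambda>l. y l * pr k l))"
    by (rule supp_SA[OF fs_fin[OF assms(1)]])
  finally show ?thesis .
qed

lemma id_eps_fs: "fsupp t \<Longrightarrow> fsupp (id_eps e t)"
  unfolding fsupp_def id_eps_def
  by (rule rev_finite_subset[of "fst ` {p. t p \<noteq> 0}"]) (auto elim!: sum.not_neutral_contains_not_neutral intro: image_eqI[where x="(_,_)"])
lemma eps_id_fs: "fsupp t \<Longrightarrow> fsupp (eps_id e t)"
  unfolding fsupp_def eps_id_def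
  by (rule rev_finite_subset[of "snd ` {p. t p \<noteq> 0}"]) (auto elim!: sum.not_neutral_contains_not_neutral intro: image_eqI[where x="(_,_)"])

lemma mulc_lc_left:
  assumes "fsupp y" "finite F" "\<And>f. f \<in> F \<Longrightarrow> fsupp (x f)"
  shows "mulc m (lc F c x) y = lc F c (\<lambda>f. mulc m (x f) y)"
proof
  fix i
  have fl: "fsupp (lc F c x)" using assms by (intro fs_lc) auto
  have k: "\<And>K. Sum_any (\<lambda>k. lc F c x k * K k) = (\<Sum>f\<in>F. c f * Sum_any (\<lambda>k. x f k * K k))"
    using assms by (intro KL) auto
  show "mulc m (lc F c x) y i = lc F c (\<lambda>f. mulc m (x f) y) i"
    unfolding mulc_SA[OF fl assms(1)] k by (simp add: lc_def mulc_SA assms)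
qed

lemma mulc_lc_right:
  assumes "fsupp y" "finite F" "\<And>f. f \<in> F \<Longrightarrow> fsupp (x f)"
  shows "mulc m y (lc F c x) = lc F c (\<lambda>f. mulc m y (x f))"
proof
  fix i
  have fl: "fsupp (lc F c x)" using assms by (intro fs_lc) auto
  have k: "\<And>K. Sum_any (\<lambda>k. lc F c x k * K k) = (\<Sum>f\<in>F. c f * Sum_any (\<lambda>k. x f k * K k))"
    using assms by (intro KL) auto
  show "mulc m y (lc F c x) i = lc F c (\<lambda>f. mulc m y (x f)) i"
    unfolding mulc_SA'[OF assms(1) fl] k by (simp add: lc_def mulc_SA' assms)
qed

lemma comulc_lc:
  assumes "finite F" "\<And>f. f \<in> F \<Longrightarrow> fsupp (x f)"
  shows "comulc d (lc F c x) = lc F c (\<lambda>f. comulc d (x f))"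
proof
  fix i
  have fl: "fsupp (lc F c x)" using assms by (intro fs_lc) auto
  have k: "\<And>K. Sum_any (\<lambda>k. lc F c x k * K k) = (\<Sum>f\<in>F. c f * Sum_any (\<lambda>k. x f k * K k))"
    using assms by (intro KL) auto
  show "comulc d (lc F c x) i = lc F c (\<lambda>f. comulc d (x f)) i"
    unfolding comulc_SA[OF fl] k by (simp add: lc_def comulc_SA assms)
qed

lemma counitc_lc:
  assumes "finite F" "\<And>f. f \<in> F \<Longrightarrow> fsupp (x f)"
  shows "counitc e (lc F c x) = (\<Sum>f\<in>F. c f * counitc e (x f))"
proof -
  have fl: "fsupp (lc F c x)" using assms by (intro fs_lc) auto
  have k: "\<And>K. Sum_any (\<lambda>k. lc F c x k * K k) = (\<Sum>f\<in>F. c f * Sum_any (\<lambda>k. x f k * K k))"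
    using assms by (intro KL) auto
  show ?thesis
    by (simp add: counitc_SA[OF fl] k counitc_SA assms)
qed

lemma mult_map_lc:
  assumes "finite F" "\<And>f. f \<in> F \<Longrightarrow> fsupp (x f)"
  shows "mult_map m (lc F c x) = lc F c (\<lambda>f. mult_map m (x f))"
proof
  fix i
  have fl: "fsupp (lc F c x)" using assms by (intro fs_lc) auto
  have k: "\<And>K. Sum_any (\<lambda>k. lc F c x k * K k) = (\<Sum>f\<in>F. c f * Sum_any (\<lambda>k. x f k * K k))"
    using assms by (intro KL) auto
  show "mult_map m (lc F c x) i = lc F c (\<lambda>f. mult_map m (x f)) i"
    unfolding mult_map_SA[OF fl] k by (simp add: lc_def mult_map_SA assms)
qed

lemma lc_row: "lc F c t (i, l) = lc F c (\<lambda>f l. t f (i, l)) l"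
  by (simp add: lc_def)
lemma lc_col: "lc F c t (i, l) = lc F c (\<lambda>f i. t f (i, l)) i"
  by (simp add: lc_def)

lemma id_eps_lc:
  assumes "finite F" "\<And>f. f \<in> F \<Longrightarrow> fsupp (x f)"
  shows "id_eps e (lc F c x) = lc F c (\<lambda>f. id_eps e (x f))"
proof
  fix i
  have fl: "fsupp (lc F c x)" using assms by (intro fs_lc) auto
  have r: "\<And>f. f \<in> F \<Longrightarrow> fsupp (\<lambda>l. x f (i, l))" using fs_row[OF assms(2)] by (simp add: fsupp_def)
  have k: "\<And>K. Sum_any (\<lambda>k. lc F c (\<lambda>f l. x f (i, l)) k * K k) = (\<Sum>f\<in>F. c f * Sum_any (\<lambda>k. x f (i,k) * K k))"
    using assms r by (intro KL) auto
  show "id_eps e (lc F c x) i = lc F c (\<lambda>f. id_eps e (x f)) i"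
    apply (subst id_eps_SA[OF fl])
    apply (subst lc_row)
    unfolding k unfolding lc_def
    by (rule sum.cong[OF refl]) (simp add: id_eps_SA[OF assms(2)])
qed

lemma eps_id_lc:
  assumes "finite F" "\<And>f. f \<in> F \<Longrightarrow> fsupp (x f)"
  shows "eps_id e (lc F c x) = lc F c (\<lambda>f. eps_id e (x f))"
proof
  fix l
  have fl: "fsupp (lc F c x)" using assms by (intro fs_lc) auto
  have r: "\<And>f. f \<in> F \<Longrightarrow> fsupp (\<lambda>i. x f (i, l))" using fs_col[OF assms(2)] by (simp add: fsupp_def)
  have k: "\<And>K. Sum_any (\<lambda>k. lc F c (\<lambda>f i. x f (i, l)) k * K k) = (\<Sum>f\<in>F. c f * Sum_any (\<lambda>k. x f (k,l) * K k))"
    using assms r by (intro KL) auto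
  show "eps_id e (lc F c x) l = lc F c (\<lambda>f. eps_id e (x f)) l"
    apply (subst eps_id_SA[OF fl])
    apply (subst lc_col)
    unfolding k unfolding lc_def
    by (rule sum.cong[OF refl]) (simp add: eps_id_SA[OF assms(2)])
qed

lemma supp_tensor: "{p. tensor x y p \<noteq> 0} = {k. x k \<noteq> 0} \<times> {l. y l \<noteq> 0}"
  by (auto simp: tensor_def)

lemma mult_map_tensor: "mult_map m (tensor x y) = mulc m x y"
  apply (rule ext)
  unfolding mult_map_def mulc_def supp_tensor sum.cartesian_product
  by (rule sum.cong) (auto simp: tensor_def)

lemma id_eps_tensor: "fsupp x \<Longrightarrow> fsupp y \<Longrightarrow> id_eps e (tensor x y) = (\<lambda>i. x i * counitc e y)"
  apply (rule ext)
  apply (simp add: id_eps_SA fs_tensor counitc_SA)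
  apply (subst Sum_any_right_distrib)
   apply (rule rev_finite_subset[OF fs_fin[of y]]) apply assumption apply auto[1]
  apply (simp add: tensor_def ac_simps)
  done

lemma eps_id_tensor: "fsupp x \<Longrightarrow> fsupp y \<Longrightarrow> eps_id e (tensor x y) = (\<lambda>l. counitc e x * y l)"
  apply (rule ext)
  apply (simp add: eps_id_SA fs_tensor counitc_SA)
  apply (simp add: tensor_def)
  apply (subst Sum_any_left_distrib)
   apply (rule rev_finite_subset[OF fs_fin[of x]]) apply assumption apply auto[1]
  apply (simp add: ac_simps)
  done

lemma sum_split_nat: "(\<Sum>k<n1+(n2::nat). f k) = (\<Sum>k<n1. f k) + (\<Sum>k<n2. f (k+n1))"
  by (induction n2) (auto simp: ac_simps)

lemma tspan_lc: "(\<lambda>p. \<Sum>k<n. tensor (x k) (y k) p) = lc {..<n} (\<lambda>_. 1) (\<lambda>k. tensor (x k) (y k))"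
  by (simp add: lc_def)

lemma tspanE:
  fixes S :: "('a \<Rightarrow> complex) set" and T :: "('b \<Rightarrow> complex) set"
  assumes "t \<in> tspan S T"
  obtains n x y where "\<forall>k<(n::nat). x k \<in> S \<and> y k \<in> T" "t = (\<lambda>p. \<Sum>k<n. tensor (x k) (y k) p)"
proof -
  from assms have "\<exists>(n::nat) x y. (\<forall>k<n. x k \<in> S \<and> y k \<in> T) \<and> t = (\<lambda>p. \<Sum>k<n. tensor (x k) (y k) p)"
    unfolding tspan_def by (rule CollectD)
  then show ?thesis using that by blast
qed

lemma ts_zero: "(\<lambda>_. 0) \<in> tspan S T"
  unfolding tspan_def by (rule CollectI, rule exI[of _ 0]) auto

lemma ts_tensor: "x \<in> S \<Longrightarrow> y \<in> T \<Longrightarrow> tensor x y \<in> tspan S T"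
  unfolding tspan_def by (rule CollectI, rule exI[of _ 1], rule exI[of _ "\<lambda>_. x"], rule exI[of _ "\<lambda>_. y"]) auto

lemma ts_add:
  assumes "t1 \<in> tspan S T" "t2 \<in> tspan S T"
  shows "(\<lambda>p. t1 p + t2 p) \<in> tspan S T"
proof -
  obtain n1 x1 y1 where 1: "\<forall>k<(n1::nat). x1 k \<in> S \<and> y1 k \<in> T" "t1 = (\<lambda>p. \<Sum>k<n1. tensor (x1 k) (y1 k) p)"
    using assms(1) by (rule tspanE)
  obtain n2 x2 y2 where 2: "\<forall>k<(n2::nat). x2 k \<in> S \<and> y2 k \<in> T" "t2 = (\<lambda>p. \<Sum>k<n2. tensor (x2 k) (y2 k) p)"
    using assms(2) by (rule tspanE)
  define x where "x k = (if k < n1 then x1 k else x2 (k - n1))" for k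
  define y where "y k = (if k < n1 then y1 k else y2 (k - n1))" for k
  have "\<forall>k<n1+n2. x k \<in> S \<and> y k \<in> T" using 1 2 by (auto simp: x_def y_def)
  moreover have "(\<lambda>p. t1 p + t2 p) = (\<lambda>p. \<Sum>k<n1+n2. tensor (x k) (y k) p)"
    by (simp add: sum_split_nat 1 2 x_def y_def)
  ultimately show ?thesis unfolding tspan_def by blast
qed

lemma ts_scale:
  assumes "csubspace S" "t \<in> tspan S T"
  shows "(\<lambda>p. c * t p) \<in> tspan S T"
proof -
  obtain n x y where 1: "\<forall>k<(n::nat). x k \<in> S \<and> y k \<in> T" "t = (\<lambda>p. \<Sum>k<n. tensor (x k) (y k) p)"
    using assms(2) by (rule tspanE)
  define xs where "xs k = (\<lambda>i. c * x k i)" for k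
  have "\<forall>k<n. xs k \<in> S \<and> y k \<in> T" using 1 assms(1) by (auto simp: csubspace_def xs_def)
  moreover have "(\<lambda>p. c * t p) = (\<lambda>p. \<Sum>k<n. tensor (xs k) (y k) p)"
    by (auto simp: 1 tensor_def sum_distrib_left mult.assoc xs_def)
  ultimately show ?thesis unfolding tspan_def by blast
qed

lemma ts_lc:
  assumes "csubspace S" "finite F" "\<And>f. f \<in> F \<Longrightarrow> t f \<in> tspan S T"
  shows "lc F c t \<in> tspan S T"
  using assms(2,3)
proof (induction F rule: finite_induct)
  case empty
  then show ?case by (simp add: lc_def ts_zero)
next
  case (insert f F)
  have "lc (insert f F) c t = (\<lambda>p. c f * t f p + lc F c t p)"
    using insert by (simp add: lc_def)
  moreover have "(\<lambda>p. c f * t f p) \<in> tspan S T" by (rule ts_scale[OF assms(1)], rule insert.prems) simp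
  ultimately show ?case using insert ts_add[of "\<lambda>p. c f * t f p" S T "lc F c t"] by simp
qed

lemma ts_fs:
  fixes S :: "('a \<Rightarrow> complex) set" and T :: "('b \<Rightarrow> complex) set"
  assumes "S \<subseteq> {x. fsupp x}" "T \<subseteq> {x. fsupp x}" "t \<in> tspan S T"
  shows "fsupp t"
proof -
  obtain n and x :: "nat \<Rightarrow> 'a \<Rightarrow> complex" and y :: "nat \<Rightarrow> 'b \<Rightarrow> complex"
    where 1: "\<forall>k<n. x k \<in> S \<and> y k \<in> T" "t = (\<lambda>p. \<Sum>k<n. tensor (x k) (y k) p)"
    using assms(3) by (rule tspanE)
  show ?thesis unfolding 1 using 1(1) assms(1,2) by (intro fs_sum fs_tensor) auto
qed

locale fac =
  fixes degA :: "'i \<Rightarrow> nat" and mA :: "'i \<Rightarrow> 'i \<Rightarrow> 'i \<Rightarrow> complex"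
    and uA :: "'i \<Rightarrow> complex" and dA :: "'i \<Rightarrow> 'i \<Rightarrow> 'i \<Rightarrow> complex" and eA :: "'i \<Rightarrow> complex"
    and A1 A2 :: "('i \<Rightarrow> complex) set"
  assumes bialgA: "graded_bialgebra degA mA uA dA eA"
    and sub1: "subalgebra mA uA A1"
    and sub2: "subalgebra mA uA A2"
    and fact: "bij_betw (mult_map mA) (tspan A1 A2) {x. fsupp x}"
begin

abbreviation "P1 \<equiv> Pi1 mA eA A1 A2"
abbreviation "P2 \<equiv> Pi2 mA eA A1 A2"

lemma A1fs: "x \<in> A1 \<Longrightarrow> fsupp x" using sub1 by (auto simp: subalgebra_def csubspace_def)
lemma A2fs: "x \<in> A2 \<Longrightarrow> fsupp x" using sub2 by (auto simp: subalgebra_def csubspace_def)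
lemma cs1: "csubspace A1" using sub1 by (simp add: subalgebra_def)
lemma cs2: "csubspace A2" using sub2 by (simp add: subalgebra_def)
lemma u1: "uA \<in> A1" using sub1 by (simp add: subalgebra_def)
lemma u2: "uA \<in> A2" using sub2 by (simp add: subalgebra_def)
lemma mulA1: "x \<in> A1 \<Longrightarrow> y \<in> A1 \<Longrightarrow> mulc mA x y \<in> A1" using sub1 by (simp add: subalgebra_def)
lemma mulA2: "x \<in> A2 \<Longrightarrow> y \<in> A2 \<Longrightarrow> mulc mA x y \<in> A2" using sub2 by (simp add: subalgebra_def)
lemma ufs: "fsupp uA" using A1fs u1 by blast
lemma unitL: "fsupp x \<Longrightarrow> mulc mA uA x = x" using bialgA by (simp add: graded_bialgebra_def)
lemma unitR: "fsupp x \<Longrightarrow> mulc mA x uA = x" using bialgA by (simp add: graded_bialgebra_def)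
lemma assoc: "fsupp x \<Longrightarrow> fsupp y \<Longrightarrow> fsupp z \<Longrightarrow> mulc mA (mulc mA x y) z = mulc mA x (mulc mA y z)"
  using bialgA by (simp add: graded_bialgebra_def)
lemma counit_mul: "fsupp x \<Longrightarrow> fsupp y \<Longrightarrow> counitc eA (mulc mA x y) = counitc eA x * counitc eA y"
  using bialgA by (simp add: graded_bialgebra_def)
lemma counit_u: "counitc eA uA = 1" using bialgA by (simp add: graded_bialgebra_def)
lemma comul_mul: "fsupp x \<Longrightarrow> fsupp y \<Longrightarrow> comulc dA (mulc mA x y) = mul2 mA (comulc dA x) (comulc dA y)"
  using bialgA by (simp add: graded_bialgebra_def)
lemma counit_L: "fsupp x \<Longrightarrow> id_eps eA (comulc dA x) = x" using bialgA by (simp add: graded_bialgebra_def)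
lemma counit_R: "fsupp x \<Longrightarrow> eps_id eA (comulc dA x) = x" using bialgA by (simp add: graded_bialgebra_def)

lemma tsp_fs: "t \<in> tspan A1 A2 \<Longrightarrow> fsupp t"
  by (rule ts_fs[of A1 A2]) (auto intro: A1fs A2fs)

lemma the_tsp: "t \<in> tspan A1 A2 \<Longrightarrow> (THE t'. t' \<in> tspan A1 A2 \<and> mult_map mA t' = mult_map mA t) = t"
  apply (rule the_equality)
   apply simp
  using fact unfolding bij_betw_def inj_on_def by blast

lemma P1_eq: "t \<in> tspan A1 A2 \<Longrightarrow> P1 (mult_map mA t) = id_eps eA t"
  unfolding Pi1_def by (simp add: the_tsp)
lemma P2_eq: "t \<in> tspan A1 A2 \<Longrightarrow> P2 (mult_map mA t) = eps_id eA t"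
  unfolding Pi2_def by (simp add: the_tsp)

lemma ex_tsp: "fsupp x \<Longrightarrow> \<exists>t\<in>tspan A1 A2. mult_map mA t = x"
proof -
  assume "fsupp x"
  hence "x \<in> mult_map mA ` tspan A1 A2" using fact unfolding bij_betw_def by auto
  thus ?thesis by auto
qed

lemma P1_fs: "fsupp x \<Longrightarrow> fsupp (P1 x)"
  using ex_tsp P1_eq tsp_fs id_eps_fs by metis
lemma P2_fs: "fsupp x \<Longrightarrow> fsupp (P2 x)"
  using ex_tsp P2_eq tsp_fs eps_id_fs by metis

lemma P1_A1: "x \<in> A1 \<Longrightarrow> P1 x = x"
proof -
  assume x: "x \<in> A1"
  have t: "tensor x uA \<in> tspan A1 A2" by (rule ts_tensor[OF x u2])
  have "P1 x = P1 (mult_map mA (tensor x uA))"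
    by (simp add: mult_map_tensor unitR A1fs x)
  also have "\<dots> = id_eps eA (tensor x uA)" by (rule P1_eq[OF t])
  also have "\<dots> = x" by (simp add: id_eps_tensor A1fs x ufs counit_u)
  finally show ?thesis .
qed

lemma P2_A2: "x \<in> A2 \<Longrightarrow> P2 x = x"
proof -
  assume x: "x \<in> A2"
  have t: "tensor uA x \<in> tspan A1 A2" by (rule ts_tensor[OF u1 x])
  have "P2 x = P2 (mult_map mA (tensor uA x))"
    by (simp add: mult_map_tensor unitL A2fs x)
  also have "\<dots> = eps_id eA (tensor uA x)" by (rule P2_eq[OF t])
  also have "\<dots> = x" by (simp add: eps_id_tensor A2fs x ufs counit_u)
  finally show ?thesis .
qed

lemma P1_lin:
  assumes "finite F" "\<And>f. f \<in> F \<Longrightarrow> fsupp (x f)"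
  shows "P1 (lc F c x) = lc F c (\<lambda>f. P1 (x f))"
proof -
  define t where "t f = (SOME t. t \<in> tspan A1 A2 \<and> mult_map mA t = x f)" for f
  have t: "t f \<in> tspan A1 A2 \<and> mult_map mA (t f) = x f" if "f \<in> F" for f
  proof -
    have "\<exists>t. t \<in> tspan A1 A2 \<and> mult_map mA t = x f" using ex_tsp[OF assms(2)[OF that]] by blast
    thus ?thesis unfolding t_def by (rule someI_ex)
  qed
  have tl: "lc F c t \<in> tspan A1 A2" by (rule ts_lc[OF cs1 assms(1)]) (simp add: t)
  have mm: "mult_map mA (lc F c t) = lc F c x"
    apply (subst mult_map_lc[OF assms(1)])
     apply (simp add: t tsp_fs)
    apply (simp add: lc_def t cong: sum.cong)
    done
  have "P1 (lc F c x) = id_eps eA (lc F c t)" using P1_eq[OF tl] mm by simp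
  also have "\<dots> = lc F c (\<lambda>f. id_eps eA (t f))"
    by (rule id_eps_lc[OF assms(1)]) (simp add: t tsp_fs)
  also have "\<dots> = lc F c (\<lambda>f. P1 (x f))"
  proof -
    have e: "P1 (x f) = id_eps eA (t f)" if "f \<in> F" for f
      using P1_eq[of "t f"] t[OF that] by simp
    show ?thesis unfolding lc_def by (rule ext, rule sum.cong[OF refl]) (simp add: e)
  qed
  finally show ?thesis .
qed

lemma P2_lin:
  assumes "finite F" "\<And>f. f \<in> F \<Longrightarrow> fsupp (x f)"
  shows "P2 (lc F c x) = lc F c (\<lambda>f. P2 (x f))"
proof -
  define t where "t f = (SOME t. t \<in> tspan A1 A2 \<and> mult_map mA t = x f)" for f
  have t: "t f \<in> tspan A1 A2 \<and> mult_map mA (t f) = x f" if "f \<in> F" for f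
  proof -
    have "\<exists>t. t \<in> tspan A1 A2 \<and> mult_map mA t = x f" using ex_tsp[OF assms(2)[OF that]] by blast
    thus ?thesis unfolding t_def by (rule someI_ex)
  qed
  have tl: "lc F c t \<in> tspan A1 A2" by (rule ts_lc[OF cs1 assms(1)]) (simp add: t)
  have mm: "mult_map mA (lc F c t) = lc F c x"
    apply (subst mult_map_lc[OF assms(1)])
     apply (simp add: t tsp_fs)
    apply (simp add: lc_def t cong: sum.cong)
    done
  have "P2 (lc F c x) = eps_id eA (lc F c t)" using P2_eq[OF tl] mm by simp
  also have "\<dots> = lc F c (\<lambda>f. eps_id eA (t f))"
    by (rule eps_id_lc[OF assms(1)]) (simp add: t tsp_fs)
  also have "\<dots> = lc F c (\<lambda>f. P2 (x f))"
  proof -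
    have e: "P2 (x f) = eps_id eA (t f)" if "f \<in> F" for f
      using P2_eq[of "t f"] t[OF that] by simp
    show ?thesis unfolding lc_def by (rule ext, rule sum.cong[OF refl]) (simp add: e)
  qed
  finally show ?thesis .
qed

end

lemma lc_single: "lc {()} (\<lambda>_. a) (\<lambda>_. x) = (\<lambda>i. a * x i)"
  by (simp add: lc_def)

lemma mulc_scaleL: "fsupp x \<Longrightarrow> fsupp y \<Longrightarrow> mulc m (\<lambda>i. a * x i) y = (\<lambda>i. a * mulc m x y i)"
  using mulc_lc_left[of y "{()}" "\<lambda>_. x" m "\<lambda>_. a"] by (simp add: lc_single)
lemma mulc_scaleR: "fsupp x \<Longrightarrow> fsupp y \<Longrightarrow> mulc m y (\<lambda>i. a * x i) = (\<lambda>i. a * mulc m y x i)"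
  using mulc_lc_right[of y "{()}" "\<lambda>_. x" m "\<lambda>_. a"] by (simp add: lc_single)

lemma mul2_tensor:
  "mul2 m (tensor a b) (tensor c d) = tensor (mulc m a c) (mulc m b d)"
proof (rule ext, clarify)
  fix i j
  have "mul2 m (tensor a b) (tensor c d) (i, j) =
    (\<Sum>k\<in>{k. a k \<noteq> 0}. \<Sum>k'\<in>{k. b k \<noteq> 0}. \<Sum>l\<in>{k. c k \<noteq> 0}. \<Sum>l'\<in>{k. d k \<noteq> 0}.
        a k * b k' * (c l * d l') * m k l i * m k' l' j)"
    unfolding mul2_def supp_tensor by (simp only: sum.cartesian_product') (simp add: tensor_def)
  also have "\<dots> = (\<Sum>k\<in>{k. a k \<noteq> 0}. \<Sum>l\<in>{k. c k \<noteq> 0}. \<Sum>k'\<in>{k. b k \<noteq> 0}. \<Sum>l'\<in>{k. d k \<noteq> 0}.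
        (a k * c l * m k l i) * (b k' * d l' * m k' l' j))"
    apply (rule sum.cong[OF refl])
    apply (rule trans[OF sum.swap])
    apply (simp add: ac_simps)
    done
  also have "\<dots> = mulc m a c i * mulc m b d j"
    unfolding mulc_def by (simp only: sum_distrib_right) (simp only: sum_distrib_left)
  finally show "mul2 m (tensor a b) (tensor c d) (i, j) = tensor (mulc m a c) (mulc m b d) (i, j)"
    by (simp add: tensor_def)
qed

lemma mul2_SA:
  assumes "fsupp t" "fsupp s"
  shows "mul2 m t s (i, j) = Sum_any (\<lambda>p. t p * Sum_any (\<lambda>q. s q * (m (fst p) (fst q) i * m (snd p) (snd q) j)))" (is "_ = ?R")
proof -
  have "mul2 m t s (i, j) = (\<Sum>p\<in>{p. t p \<noteq> 0}. t p * (\<Sum>q\<in>{q. s q \<noteq> 0}. s q * (m (fst p) (fst q) i * m (snd p) (snd q) j)))"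
    by (simp add: mul2_def sum_distrib_left ac_simps)
  also have "\<dots> = (\<Sum>p\<in>{p. t p \<noteq> 0}. t p * Sum_any (\<lambda>q. s q * (m (fst p) (fst q) i * m (snd p) (snd q) j)))"
    using supp_SA[OF fs_fin[OF assms(2)]] by simp
  also have "\<dots> = ?R"
    by (rule supp_SA[OF fs_fin[OF assms(1)]])
  finally show ?thesis .
qed

lemma mul2_SA':
  assumes "fsupp t" "fsupp s"
  shows "mul2 m t s (i, j) = Sum_any (\<lambda>q. s q * Sum_any (\<lambda>p. t p * (m (fst p) (fst q) i * m (snd p) (snd q) j)))" (is "_ = ?R")
proof -
  have "mul2 m t s (i, j) = (\<Sum>q\<in>{q. s q \<noteq> 0}. \<Sum>p\<in>{p. t p \<noteq> 0}. t p * s q * m (fst p) (fst q) i * m (snd p) (snd q) j)"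
    by (simp add: mul2_def sum.swap[of _ "{p. t p \<noteq> 0}"])
  also have "\<dots> = (\<Sum>q\<in>{q. s q \<noteq> 0}. s q * (\<Sum>p\<in>{p. t p \<noteq> 0}. t p * (m (fst p) (fst q) i * m (snd p) (snd q) j)))"
    by (simp add: sum_distrib_left ac_simps)
  also have "\<dots> = (\<Sum>q\<in>{q. s q \<noteq> 0}. s q * Sum_any (\<lambda>p. t p * (m (fst p) (fst q) i * m (snd p) (snd q) j)))"
    using supp_SA[OF fs_fin[OF assms(1)]] by simp
  also have "\<dots> = ?R"
    by (rule supp_SA[OF fs_fin[OF assms(2)]])
  finally show ?thesis .
qed

lemma mul2_lc_left:
  assumes "fsupp s" "finite F" "\<And>f. f \<in> F \<Longrightarrow> fsupp (t f)"
  shows "mul2 m (lc F c t) s = lc F c (\<lambda>f. mul2 m (t f) s)"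
proof (rule ext, clarify)
  fix i j
  have fl: "fsupp (lc F c t)" using assms by (intro fs_lc) auto
  have k: "\<And>K. Sum_any (\<lambda>k. lc F c t k * K k) = (\<Sum>f\<in>F. c f * Sum_any (\<lambda>k. t f k * K k))"
    using assms by (intro KL) auto
  show "mul2 m (lc F c t) s (i, j) = lc F c (\<lambda>f. mul2 m (t f) s) (i, j)"
    unfolding mul2_SA[OF fl assms(1)] k by (simp add: lc_def mul2_SA assms)
qed

lemma mul2_lc_right:
  assumes "fsupp s" "finite F" "\<And>f. f \<in> F \<Longrightarrow> fsupp (t f)"
  shows "mul2 m s (lc F c t) = lc F c (\<lambda>f. mul2 m s (t f))"
proof (rule ext, clarify)
  fix i j
  have fl: "fsupp (lc F c t)" using assms by (intro fs_lc) auto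
  have k: "\<And>K. Sum_any (\<lambda>k. lc F c t k * K k) = (\<Sum>f\<in>F. c f * Sum_any (\<lambda>k. t f k * K k))"
    using assms by (intro KL) auto
  show "mul2 m s (lc F c t) (i, j) = lc F c (\<lambda>f. mul2 m s (t f)) (i, j)"
    unfolding mul2_SA'[OF assms(1) fl] k by (simp add: lc_def mul2_SA' assms)
qed

definition Mk where
  "Mk mA eA A1 A2 p i = mulc mA (Pi1 mA eA A1 A2 (delta (fst p))) (Pi2 mA eA A1 A2 (delta (snd p))) i"
definition Phi where
  "Phi mA eA A1 A2 t = (\<lambda>i. Sum_any (\<lambda>p. t p * Mk mA eA A1 A2 p i))"

context fac
begin

abbreviation "Ph \<equiv> Phi mA eA A1 A2"

lemma tsp_lc_fs:
  assumes "\<forall>k<(n::nat). x1 k \<in> A1 \<and> x2 k \<in> A2"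
  shows "\<And>k. k \<in> {..<n} \<Longrightarrow> fsupp (x1 k)" "\<And>k. k \<in> {..<n} \<Longrightarrow> fsupp (x2 k)"
  using assms A1fs A2fs by auto

lemma P1_mul:
  assumes y: "fsupp y" and w: "w \<in> A2"
  shows "P1 (mulc mA y w) = (\<lambda>i. P1 y i * counitc eA w)"
proof -
  obtain t where t: "t \<in> tspan A1 A2" "mult_map mA t = y" using ex_tsp[OF y] by blast
  obtain n x1 x2 where nx: "\<forall>k<(n::nat). x1 k \<in> A1 \<and> x2 k \<in> A2"
      "t = (\<lambda>p. \<Sum>k<n. tensor (x1 k) (x2 k) p)"
    using t(1) by (rule tspanE)
  note f1 = tsp_lc_fs(1)[OF nx(1)] and f2 = tsp_lc_fs(2)[OF nx(1)]
  have wf: "fsupp w" by (rule A2fs[OF w])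
  have f2w: "\<And>k. k \<in> {..<n} \<Longrightarrow> fsupp (mulc mA (x2 k) w)" by (rule mulc_fs[OF bialgA f2 wf])
  have tlc: "t = lc {..<n} (\<lambda>_. 1) (\<lambda>k. tensor (x1 k) (x2 k))" by (simp add: nx tspan_lc)
  define t' where "t' = lc {..<n} (\<lambda>_. 1) (\<lambda>k. tensor (x1 k) (mulc mA (x2 k) w))"
  have t'T: "t' \<in> tspan A1 A2" unfolding t'_def
    by (rule ts_lc[OF cs1]) (auto intro!: ts_tensor mulA2 simp: nx w)
  have yl: "y = lc {..<n} (\<lambda>_. 1) (\<lambda>k. mulc mA (x1 k) (x2 k))"
    unfolding t(2)[symmetric] tlc
    by (subst mult_map_lc) (auto simp: fs_tensor f1 f2 mult_map_tensor)
  have "mult_map mA t' = lc {..<n} (\<lambda>_. 1) (\<lambda>k. mulc mA (x1 k) (mulc mA (x2 k) w))"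
    unfolding t'_def by (subst mult_map_lc) (auto simp: fs_tensor f1 f2w mult_map_tensor)
  also have "\<dots> = lc {..<n} (\<lambda>_. 1) (\<lambda>k. mulc mA (mulc mA (x1 k) (x2 k)) w)"
    unfolding lc_def by (rule ext, rule sum.cong[OF refl]) (simp add: assoc f1 f2 wf)
  also have "\<dots> = mulc mA y w"
    unfolding yl by (rule mulc_lc_left[symmetric]) (auto simp: wf intro: mulc_fs[OF bialgA] f1 f2)
  finally have mt': "mult_map mA t' = mulc mA y w" .
  have "P1 (mulc mA y w) = id_eps eA t'" using P1_eq[OF t'T] mt' by simp
  also have "\<dots> = lc {..<n} (\<lambda>_. 1) (\<lambda>k. id_eps eA (tensor (x1 k) (mulc mA (x2 k) w)))"
    unfolding t'_def by (rule id_eps_lc) (auto simp: fs_tensor f1 f2w)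
  also have "\<dots> = lc {..<n} (\<lambda>_. 1) (\<lambda>k i. x1 k i * (counitc eA (x2 k) * counitc eA w))"
    unfolding lc_def by (rule ext, rule sum.cong[OF refl]) (simp add: id_eps_tensor f1 f2w counit_mul f2 wf)
  also have "\<dots> = (\<lambda>i. P1 y i * counitc eA w)"
  proof -
    have "P1 y = id_eps eA t" using P1_eq[OF t(1)] t(2) by simp
    also have "\<dots> = lc {..<n} (\<lambda>_. 1) (\<lambda>k. id_eps eA (tensor (x1 k) (x2 k)))"
      unfolding tlc by (rule id_eps_lc) (auto simp: fs_tensor f1 f2)
    also have "\<dots> = lc {..<n} (\<lambda>_. 1) (\<lambda>k i. x1 k i * counitc eA (x2 k))"
      unfolding lc_def by (rule ext, rule sum.cong[OF refl]) (simp add: id_eps_tensor f1 f2)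
    finally have "P1 y = lc {..<n} (\<lambda>_. 1) (\<lambda>k i. x1 k i * counitc eA (x2 k))" .
    thus ?thesis by (simp add: lc_def sum_distrib_right mult.assoc)
  qed
  finally show ?thesis .
qed

lemma P2_mul:
  assumes y: "fsupp y" and w: "w \<in> A1"
  shows "P2 (mulc mA w y) = (\<lambda>i. counitc eA w * P2 y i)"
proof -
  obtain t where t: "t \<in> tspan A1 A2" "mult_map mA t = y" using ex_tsp[OF y] by blast
  obtain n x1 x2 where nx: "\<forall>k<(n::nat). x1 k \<in> A1 \<and> x2 k \<in> A2"
      "t = (\<lambda>p. \<Sum>k<n. tensor (x1 k) (x2 k) p)"
    using t(1) by (rule tspanE)
  note f1 = tsp_lc_fs(1)[OF nx(1)] and f2 = tsp_lc_fs(2)[OF nx(1)]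
  have wf: "fsupp w" by (rule A1fs[OF w])
  have f1w: "\<And>k. k \<in> {..<n} \<Longrightarrow> fsupp (mulc mA w (x1 k))" by (rule mulc_fs[OF bialgA wf f1])
  have tlc: "t = lc {..<n} (\<lambda>_. 1) (\<lambda>k. tensor (x1 k) (x2 k))" by (simp add: nx tspan_lc)
  define t' where "t' = lc {..<n} (\<lambda>_. 1) (\<lambda>k. tensor (mulc mA w (x1 k)) (x2 k))"
  have t'T: "t' \<in> tspan A1 A2" unfolding t'_def
    by (rule ts_lc[OF cs1]) (auto intro!: ts_tensor mulA1 simp: nx w)
  have yl: "y = lc {..<n} (\<lambda>_. 1) (\<lambda>k. mulc mA (x1 k) (x2 k))"
    unfolding t(2)[symmetric] tlc
    by (subst mult_map_lc) (auto simp: fs_tensor f1 f2 mult_map_tensor)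
  have "mult_map mA t' = lc {..<n} (\<lambda>_. 1) (\<lambda>k. mulc mA (mulc mA w (x1 k)) (x2 k))"
    unfolding t'_def by (subst mult_map_lc) (auto simp: fs_tensor f1w f2 mult_map_tensor)
  also have "\<dots> = lc {..<n} (\<lambda>_. 1) (\<lambda>k. mulc mA w (mulc mA (x1 k) (x2 k)))"
    unfolding lc_def by (rule ext, rule sum.cong[OF refl]) (simp add: assoc f1 f2 wf)
  also have "\<dots> = mulc mA w y"
    unfolding yl by (rule mulc_lc_right[symmetric]) (auto simp: wf intro: mulc_fs[OF bialgA] f1 f2)
  finally have mt': "mult_map mA t' = mulc mA w y" .
  have "P2 (mulc mA w y) = eps_id eA t'" using P2_eq[OF t'T] mt' by simp
  also have "\<dots> = lc {..<n} (\<lambda>_. 1) (\<lambda>k. eps_id eA (tensor (mulc mA w (x1 k)) (x2 k)))"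
    unfolding t'_def by (rule eps_id_lc) (auto simp: fs_tensor f1w f2)
  also have "\<dots> = lc {..<n} (\<lambda>_. 1) (\<lambda>k i. (counitc eA w * counitc eA (x1 k)) * x2 k i)"
    unfolding lc_def by (rule ext, rule sum.cong[OF refl]) (simp add: eps_id_tensor f1w f2 counit_mul f1 wf)
  also have "\<dots> = (\<lambda>i. counitc eA w * P2 y i)"
  proof -
    have "P2 y = eps_id eA t" using P2_eq[OF t(1)] t(2) by simp
    also have "\<dots> = lc {..<n} (\<lambda>_. 1) (\<lambda>k. eps_id eA (tensor (x1 k) (x2 k)))"
      unfolding tlc by (rule eps_id_lc) (auto simp: fs_tensor f1 f2)
    also have "\<dots> = lc {..<n} (\<lambda>_. 1) (\<lambda>k i. counitc eA (x1 k) * x2 k i)"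
      unfolding lc_def by (rule ext, rule sum.cong[OF refl]) (simp add: eps_id_tensor f1 f2)
    finally have "P2 y = lc {..<n} (\<lambda>_. 1) (\<lambda>k i. counitc eA (x1 k) * x2 k i)" .
    thus ?thesis by (simp add: lc_def sum_distrib_left mult.assoc)
  qed
  finally show ?thesis .
qed

end

context fac
begin

lemma Phi_lc:
  assumes "finite F" "\<And>f. f \<in> F \<Longrightarrow> fsupp (t f)"
  shows "Ph (lc F c t) = lc F c (\<lambda>f. Ph (t f))"
proof
  fix i
  have k: "\<And>K. Sum_any (\<lambda>k. lc F c t k * K k) = (\<Sum>f\<in>F. c f * Sum_any (\<lambda>k. t f k * K k))"
    using assms by (intro KL) auto
  show "Ph (lc F c t) i = lc F c (\<lambda>f. Ph (t f)) i"
    unfolding Phi_def k unfolding lc_def by simp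
qed

lemma P1d_fs: "fsupp (P1 (delta k))" by (rule P1_fs) simp
lemma P2d_fs: "fsupp (P2 (delta k))" by (rule P2_fs) simp

lemma Phi_tensor:
  assumes u: "fsupp u" and v: "fsupp v"
  shows "Ph (tensor u v) = mulc mA (P1 u) (P2 v)"
proof
  fix i
  let ?U = "{k. u k \<noteq> 0}" and ?V = "{k. v k \<noteq> 0}"
  have fU: "finite ?U" and fV: "finite ?V" using u v by (auto simp: fsupp_def)
  have "Ph (tensor u v) i = (\<Sum>p\<in>?U \<times> ?V. tensor u v p * Mk mA eA A1 A2 p i)"
    unfolding Phi_def by (rule SA_eq) (use fU fV in \<open>auto simp: tensor_def\<close>)
  also have "\<dots> = (\<Sum>k\<in>?U. \<Sum>l\<in>?V. u k * v l * Mk mA eA A1 A2 (k, l) i)"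
    by (simp add: sum.cartesian_product' tensor_def)
  finally have L: "Ph (tensor u v) i = (\<Sum>k\<in>?U. \<Sum>l\<in>?V. u k * v l * Mk mA eA A1 A2 (k, l) i)" .
  have pu: "P1 u = lc ?U u (\<lambda>k. P1 (delta k))"
    using P1_lin[OF fU, of delta u] lc_supp_delta[OF u fU] by simp
  have pv: "P2 v = lc ?V v (\<lambda>k. P2 (delta k))"
    using P2_lin[OF fV, of delta v] lc_supp_delta[OF v fV] by simp
  have fpv: "fsupp (lc ?V v (\<lambda>k. P2 (delta k)))" by (rule fs_lc[OF fV]) (simp add: P2d_fs)
  have "mulc mA (P1 u) (P2 v) = lc ?U u (\<lambda>k. mulc mA (P1 (delta k)) (lc ?V v (\<lambda>k. P2 (delta k))))"
    unfolding pu pv by (rule mulc_lc_left[OF fpv fU]) (simp add: P1d_fs)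
  also have "\<dots> = lc ?U u (\<lambda>k. lc ?V v (\<lambda>l. mulc mA (P1 (delta k)) (P2 (delta l))))"
    unfolding lc_def[of ?U]
    by (rule ext, rule sum.cong[OF refl], subst mulc_lc_right[OF P1d_fs fV]) (auto simp: P2d_fs)
  finally show "Ph (tensor u v) i = mulc mA (P1 u) (P2 v) i"
    unfolding L by (simp add: lc_def Mk_def sum_distrib_left mult.assoc)
qed

end

locale fac2 = fac +
  assumes cop1: "\<forall>x\<in>A1. comulc dA x \<in> tspan {y. fsupp y} A1"
    and cop2: "\<forall>x\<in>A2. comulc dA x \<in> tspan A2 {y. fsupp y}"
begin

lemma K2:
  assumes x1: "x1 \<in> A1" and x2: "x2 \<in> A2"
  shows "Ph (comulc dA (mulc mA x1 x2)) = mulc mA x1 x2"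
proof -
  have fx1: "fsupp x1" by (rule A1fs[OF x1])
  have fx2: "fsupp x2" by (rule A2fs[OF x2])
  obtain n1 u v where nu: "\<forall>k<(n1::nat). u k \<in> {y. fsupp y} \<and> v k \<in> A1"
      "comulc dA x1 = (\<lambda>p. \<Sum>k<n1. tensor (u k) (v k) p)"
    using bspec[OF cop1 x1] by (rule tspanE)
  obtain n2 w z where nw: "\<forall>k<(n2::nat). w k \<in> A2 \<and> z k \<in> {y. fsupp y}"
      "comulc dA x2 = (\<lambda>p. \<Sum>k<n2. tensor (w k) (z k) p)"
    using bspec[OF cop2 x2] by (rule tspanE)
  let ?R = "{..<n1}" and ?S = "{..<n2}"
  have fu: "\<And>r. r \<in> ?R \<Longrightarrow> fsupp (u r)" and fv: "\<And>r. r \<in> ?R \<Longrightarrow> fsupp (v r)"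
    using nu(1) A1fs by auto
  have fw: "\<And>r. r \<in> ?S \<Longrightarrow> fsupp (w r)" and fz: "\<And>r. r \<in> ?S \<Longrightarrow> fsupp (z r)"
    using nw(1) A2fs by auto
  have v1: "\<And>r. r \<in> ?R \<Longrightarrow> v r \<in> A1" and w2: "\<And>r. r \<in> ?S \<Longrightarrow> w r \<in> A2"
    using nu(1) nw(1) by auto
  have D1: "comulc dA x1 = lc ?R (\<lambda>_. 1) (\<lambda>r. tensor (u r) (v r))" by (simp add: nu tspan_lc)
  have D2: "comulc dA x2 = lc ?S (\<lambda>_. 1) (\<lambda>r. tensor (w r) (z r))" by (simp add: nw tspan_lc)
  have fD2: "fsupp (lc ?S (\<lambda>_. 1) (\<lambda>r. tensor (w r) (z r)))"
    by (rule fs_lc) (auto intro: fs_tensor fw fz)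
  have "comulc dA (mulc mA x1 x2) = mul2 mA (comulc dA x1) (comulc dA x2)"
    by (rule comul_mul[OF fx1 fx2])
  also have "\<dots> = lc ?R (\<lambda>_. 1) (\<lambda>r. mul2 mA (tensor (u r) (v r)) (lc ?S (\<lambda>_. 1) (\<lambda>r. tensor (w r) (z r))))"
    unfolding D1 D2 by (rule mul2_lc_left[OF fD2]) (auto intro: fs_tensor fu fv)
  also have "\<dots> = lc ?R (\<lambda>_. 1) (\<lambda>r. lc ?S (\<lambda>_. 1) (\<lambda>s. tensor (mulc mA (u r) (w s)) (mulc mA (v r) (z s))))"
    unfolding lc_def[of ?R]
    apply (rule ext, rule sum.cong[OF refl])
    apply (subst mul2_lc_right)
       apply (auto intro: fs_tensor fu fv fw fz simp: mul2_tensor)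
    done
  finally have DD: "comulc dA (mulc mA x1 x2) = \<dots>" .
  have fin_in: "\<And>r. r \<in> ?R \<Longrightarrow> fsupp (lc ?S (\<lambda>_. 1) (\<lambda>s. tensor (mulc mA (u r) (w s)) (mulc mA (v r) (z s))))"
    by (rule fs_lc) (auto intro!: fs_tensor mulc_fs[OF bialgA] fu fv fw fz)
  have "Ph (comulc dA (mulc mA x1 x2)) = lc ?R (\<lambda>_. 1) (\<lambda>r. Ph (lc ?S (\<lambda>_. 1) (\<lambda>s. tensor (mulc mA (u r) (w s)) (mulc mA (v r) (z s)))))"
    unfolding DD by (rule Phi_lc) (auto intro: fin_in)
  also have "\<dots> = lc ?R (\<lambda>_. 1) (\<lambda>r. lc ?S (\<lambda>_. 1) (\<lambda>s. mulc mA (P1 (mulc mA (u r) (w s))) (P2 (mulc mA (v r) (z s)))))"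
  proof -
    have PT: "Ph (tensor (mulc mA (u r) (w s)) (mulc mA (v r) (z s))) = mulc mA (P1 (mulc mA (u r) (w s))) (P2 (mulc mA (v r) (z s)))"
      if "r \<in> ?R" "s \<in> ?S" for r s
      by (rule Phi_tensor) (auto intro!: mulc_fs[OF bialgA] fu fv fw fz that)
    have PL: "Ph (lc ?S (\<lambda>_. 1) (\<lambda>s. tensor (mulc mA (u r) (w s)) (mulc mA (v r) (z s))))
       = lc ?S (\<lambda>_. 1) (\<lambda>s. Ph (tensor (mulc mA (u r) (w s)) (mulc mA (v r) (z s))))" if "r \<in> ?R" for r
      by (rule Phi_lc) (auto intro!: fs_tensor mulc_fs[OF bialgA] fu fv fw fz that)
    show ?thesis
      unfolding lc_def[of ?R]
      apply (rule ext, rule sum.cong[OF refl])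
      apply (subst PL, assumption)
      unfolding lc_def
      apply (rule arg_cong[where f="\<lambda>x. 1 * x"], rule sum.cong[OF refl])
      apply (simp add: PT)
      done
  qed
  also have "\<dots> = lc ?R (\<lambda>_. 1) (\<lambda>r. lc ?S (\<lambda>_. 1) (\<lambda>s i. counitc eA (w s) * (counitc eA (v r) * mulc mA (P1 (u r)) (P2 (z s)) i)))"
    unfolding lc_def
    apply (rule ext, rule sum.cong[OF refl], rule arg_cong[where f="\<lambda>x. 1 * x"], rule sum.cong[OF refl])
    apply (simp add: P1_mul fu w2 P2_mul fz v1)
    apply (subst mult.commute[of "P1 _ _"])
    apply (simp add: mulc_scaleL mulc_scaleR P1_fs P2_fs fu fz fs_scale)
    done
  also have "\<dots> = mulc mA (P1 (lc ?R (\<lambda>r. counitc eA (v r)) u)) (P2 (lc ?S (\<lambda>s. counitc eA (w s)) z))"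
  proof -
    have fl2: "fsupp (lc ?S (\<lambda>s. counitc eA (w s)) (\<lambda>s. P2 (z s)))"
      by (rule fs_lc) (auto intro: P2_fs fz)
    have "mulc mA (P1 (lc ?R (\<lambda>r. counitc eA (v r)) u)) (P2 (lc ?S (\<lambda>s. counitc eA (w s)) z))
       = mulc mA (lc ?R (\<lambda>r. counitc eA (v r)) (\<lambda>r. P1 (u r))) (lc ?S (\<lambda>s. counitc eA (w s)) (\<lambda>s. P2 (z s)))"
      by (subst P1_lin, simp, erule fu, subst P2_lin, simp, erule fz, rule refl)
    also have "\<dots> = lc ?R (\<lambda>r. counitc eA (v r)) (\<lambda>r. mulc mA (P1 (u r)) (lc ?S (\<lambda>s. counitc eA (w s)) (\<lambda>s. P2 (z s))))"
      by (rule mulc_lc_left[OF fl2]) (auto intro: P1_fs fu)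
    also have "\<dots> = lc ?R (\<lambda>r. counitc eA (v r)) (\<lambda>r. lc ?S (\<lambda>s. counitc eA (w s)) (\<lambda>s. mulc mA (P1 (u r)) (P2 (z s))))"
      unfolding lc_def[of ?R]
      by (rule ext, rule sum.cong[OF refl], subst mulc_lc_right) (auto intro: P1_fs P2_fs fu fz)
    finally show ?thesis by (simp add: lc_def sum_distrib_left ac_simps)
  qed
  also have "lc ?R (\<lambda>r. counitc eA (v r)) u = x1"
  proof -
    have "x1 = id_eps eA (comulc dA x1)" by (simp add: counit_L fx1)
    also have "\<dots> = lc ?R (\<lambda>_. 1) (\<lambda>r. id_eps eA (tensor (u r) (v r)))"
      unfolding D1 by (rule id_eps_lc) (auto intro: fs_tensor fu fv)
    also have "\<dots> = lc ?R (\<lambda>r. counitc eA (v r)) u"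
      unfolding lc_def by (rule ext, rule sum.cong[OF refl]) (simp add: id_eps_tensor fu fv)
    finally show ?thesis by simp
  qed
  also have "lc ?S (\<lambda>s. counitc eA (w s)) z = x2"
  proof -
    have "x2 = eps_id eA (comulc dA x2)" by (simp add: counit_R fx2)
    also have "\<dots> = lc ?S (\<lambda>_. 1) (\<lambda>r. eps_id eA (tensor (w r) (z r)))"
      unfolding D2 by (rule eps_id_lc) (auto intro: fs_tensor fw fz)
    also have "\<dots> = lc ?S (\<lambda>s. counitc eA (w s)) z"
      unfolding lc_def by (rule ext, rule sum.cong[OF refl]) (simp add: eps_id_tensor fw fz)
    finally show ?thesis by simp
  qed
  finally show ?thesis by (simp add: P1_A1 x1 P2_A2 x2)
qed

lemma K:
  assumes x: "fsupp x"
  shows "Ph (comulc dA x) = x"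
proof -
  obtain t where t: "t \<in> tspan A1 A2" "mult_map mA t = x" using ex_tsp[OF x] by blast
  obtain n x1 x2 where nx: "\<forall>k<(n::nat). x1 k \<in> A1 \<and> x2 k \<in> A2"
      "t = (\<lambda>p. \<Sum>k<n. tensor (x1 k) (x2 k) p)"
    using t(1) by (rule tspanE)
  note f1 = tsp_lc_fs(1)[OF nx(1)] and f2 = tsp_lc_fs(2)[OF nx(1)]
  have tlc: "t = lc {..<n} (\<lambda>_. 1) (\<lambda>k. tensor (x1 k) (x2 k))" by (simp add: nx tspan_lc)
  have xl: "x = lc {..<n} (\<lambda>_. 1) (\<lambda>k. mulc mA (x1 k) (x2 k))"
    unfolding t(2)[symmetric] tlc
    by (subst mult_map_lc) (auto simp: fs_tensor f1 f2 mult_map_tensor)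
  have fm: "\<And>k. k \<in> {..<n} \<Longrightarrow> fsupp (mulc mA (x1 k) (x2 k))" by (rule mulc_fs[OF bialgA f1 f2])
  have "Ph (comulc dA x) = Ph (lc {..<n} (\<lambda>_. 1) (\<lambda>k. comulc dA (mulc mA (x1 k) (x2 k))))"
    by (subst xl, subst comulc_lc) (auto simp: fm)
  also have "\<dots> = lc {..<n} (\<lambda>_. 1) (\<lambda>k. Ph (comulc dA (mulc mA (x1 k) (x2 k))))"
    by (rule Phi_lc) (auto intro: comulc_fs[OF bialgA] fm)
  also have "\<dots> = lc {..<n} (\<lambda>_. 1) (\<lambda>k. mulc mA (x1 k) (x2 k))"
    unfolding lc_def by (rule ext, rule sum.cong[OF refl]) (simp add: K2 nx(1))
  finally show ?thesis using xl by simp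
qed

end

lemma mulc_set:
  assumes "fsupp x" "fsupp y" "finite P" "\<And>p. m (fst p) (snd p) i \<noteq> 0 \<Longrightarrow> p \<in> P"
  shows "mulc m x y i = (\<Sum>p\<in>P. x (fst p) * y (snd p) * m (fst p) (snd p) i)"
proof -
  have "mulc m x y i = (\<Sum>p\<in>{k. x k \<noteq> 0} \<times> {l. y l \<noteq> 0}. x (fst p) * y (snd p) * m (fst p) (snd p) i)"
    unfolding mulc_def by (simp add: sum.cartesian_product')
  also have "\<dots> = Sum_any (\<lambda>p. x (fst p) * y (snd p) * m (fst p) (snd p) i)"
    by (rule SA_eq[symmetric]) (use assms(1,2) in \<open>auto simp: fsupp_def\<close>)
  also have "\<dots> = (\<Sum>p\<in>P. x (fst p) * y (snd p) * m (fst p) (snd p) i)"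
    by (rule SA_eq) (use assms(3,4) in auto)
  finally show ?thesis .
qed

locale mainloc = fac2 degA mA uA dA eA A1 A2
  for degA :: "'i \<Rightarrow> nat" and mA :: "'i \<Rightarrow> 'i \<Rightarrow> 'i \<Rightarrow> complex"
    and uA :: "'i \<Rightarrow> complex" and dA :: "'i \<Rightarrow> 'i \<Rightarrow> 'i \<Rightarrow> complex" and eA :: "'i \<Rightarrow> complex"
    and A1 A2 :: "('i \<Rightarrow> complex) set" +
  fixes degB :: "'j \<Rightarrow> nat" and mB :: "'j \<Rightarrow> 'j \<Rightarrow> 'j \<Rightarrow> complex"
    and uB :: "'j \<Rightarrow> complex" and dB :: "'j \<Rightarrow> 'j \<Rightarrow> 'j \<Rightarrow> complex" and eB :: "'j \<Rightarrow> complex"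
    and pr :: "'i \<Rightarrow> 'j \<Rightarrow> complex"
    and dk :: "'k \<Rightarrow> nat" and a :: "'k \<Rightarrow> 'i \<Rightarrow> complex" and b :: "'k \<Rightarrow> 'j \<Rightarrow> complex"
  assumes bialgB: "graded_bialgebra degB mB uB dB eB"
    and pairing: "graded_nondeg_pairing degA degB pr"
    and pair_mult: "\<forall>x y1 y2. fsupp x \<longrightarrow> fsupp y1 \<longrightarrow> fsupp y2 \<longrightarrow>
                     pairing pr x (mulc mB y1 y2) = pairing2 pr (comulc dA x) (tensor y1 y2)"
    and dual: "dual_bases degA degB pr dk a b"
begin

abbreviation "C \<equiv> canon a b"

lemma dfin: "finite {\<alpha>. dk \<alpha> = n}" using dual by (simp add: dual_bases_def)
lemma dfin_le: "finite {\<alpha>. dk \<alpha> \<le> n}"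
proof -
  have "{\<alpha>. dk \<alpha> \<le> n} = (\<Union>m\<in>{..n}. {\<alpha>. dk \<alpha> = m})" by auto
  thus ?thesis using dfin by auto
qed
lemma afs: "fsupp (a \<alpha>)" using dual by (simp add: dual_bases_def)
lemma bfs: "fsupp (b \<alpha>)" using dual by (simp add: dual_bases_def)
lemma adeg: "a \<alpha> i \<noteq> 0 \<Longrightarrow> degA i = dk \<alpha>" using dual by (simp add: dual_bases_def homog_def)
lemma bdeg: "b \<alpha> j \<noteq> 0 \<Longrightarrow> degB j = dk \<alpha>" using dual by (simp add: dual_bases_def homog_def)
lemma prdeg: "pr i j \<noteq> 0 \<Longrightarrow> degA i = degB j" using pairing by (simp add: graded_nondeg_pairing_def)
lemma dual1: "fsupp y \<Longrightarrow> (\<lambda>j. \<Sum>\<alpha>\<in>{\<alpha>. pairing pr (a \<alpha>) y \<noteq> 0}. pairing pr (a \<alpha>) y * b \<alpha> j) = y"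
  using dual by (simp add: dual_bases_def)
lemma dual2: "fsupp x \<Longrightarrow> (\<lambda>i. \<Sum>\<alpha>\<in>{\<alpha>. pairing pr x (b \<alpha>) \<noteq> 0}. a \<alpha> i * pairing pr x (b \<alpha>)) = x"
  using dual by (simp add: dual_bases_def)

lemma canon_set:
  assumes "finite D" "{\<gamma>. dk \<gamma> = degB j} \<subseteq> D"
  shows "C (i, j) = (\<Sum>\<gamma>\<in>D. a \<gamma> i * b \<gamma> j)"
proof -
  have "C (i, j) = Sum_any (\<lambda>\<gamma>. a \<gamma> i * b \<gamma> j)"
    by (simp add: canon_def Sum_any.expand_set)
  also have "\<dots> = (\<Sum>\<gamma>\<in>D. a \<gamma> i * b \<gamma> j)"
    by (rule SA_eq[OF assms(1)]) (use assms(2) bdeg in force)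
  finally show ?thesis .
qed

lemma ml_eq:
  assumes lin: "\<And>(F::'i set) c (x::'i \<Rightarrow> 'i \<Rightarrow> complex). finite F \<Longrightarrow> (\<And>f. f \<in> F \<Longrightarrow> fsupp (x f)) \<Longrightarrow> g (lc F c x) = lc F c (\<lambda>f. g (x f))"
    and D: "finite D" "{\<alpha>. dk \<alpha> = degB q} \<subseteq> D"
  shows "map_left g C (p, q) = (\<Sum>\<alpha>\<in>D. g (a \<alpha>) p * b \<alpha> q)"
proof -
  let ?K = "{k. degA k = degB q}"
  have fK: "finite ?K" by (rule gb_fin[OF bialgA])
  have Ck: "\<And>k. C (k, q) = (\<Sum>\<alpha>\<in>D. a \<alpha> k * b \<alpha> q)" by (rule canon_set[OF D])
  have sub: "{k. C (k, q) \<noteq> 0} \<subseteq> ?K"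
  proof
    fix k assume "k \<in> {k. C (k, q) \<noteq> 0}"
    then obtain \<alpha> where "a \<alpha> k * b \<alpha> q \<noteq> 0" unfolding Ck by (auto elim: sum.not_neutral_contains_not_neutral)
    thus "k \<in> ?K" using adeg bdeg by force
  qed
  have "map_left g C (p, q) = (\<Sum>k\<in>{k. C (k, q) \<noteq> 0}. g (delta k) p * C (k, q))"
    by (simp add: map_left_def)
  also have "\<dots> = (\<Sum>k\<in>?K. g (delta k) p * C (k, q))"
    by (rule sum.mono_neutral_left[OF fK sub]) auto
  also have "\<dots> = (\<Sum>k\<in>?K. \<Sum>\<alpha>\<in>D. g (delta k) p * (a \<alpha> k * b \<alpha> q))"
    by (simp add: Ck sum_distrib_left)
  also have "\<dots> = (\<Sum>\<alpha>\<in>D. \<Sum>k\<in>?K. g (delta k) p * (a \<alpha> k * b \<alpha> q))"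
    by (rule sum.swap)
  also have "\<dots> = (\<Sum>\<alpha>\<in>D. g (a \<alpha>) p * b \<alpha> q)"
  proof (rule sum.cong[OF refl])
    fix \<alpha>
    show "(\<Sum>k\<in>?K. g (delta k) p * (a \<alpha> k * b \<alpha> q)) = g (a \<alpha>) p * b \<alpha> q"
    proof (cases "b \<alpha> q = 0")
      case True thus ?thesis by simp
    next
      case False
      hence sa: "{k. a \<alpha> k \<noteq> 0} \<subseteq> ?K" using adeg bdeg by force
      have "g (a \<alpha>) = g (lc ?K (a \<alpha>) delta)" by (simp add: lc_supp_delta[OF afs fK sa])
      also have "\<dots> = lc ?K (a \<alpha>) (\<lambda>k. g (delta k))" by (rule lin[OF fK]) simp
      finally have "g (a \<alpha>) p = (\<Sum>k\<in>?K. a \<alpha> k * g (delta k) p)" by (simp add: lc_def)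
      thus ?thesis by (simp add: sum_distrib_left ac_simps)
    qed
  qed
  finally show ?thesis .
qed

lemma X1: "{\<alpha>. dk \<alpha> = degB q} \<subseteq> D \<Longrightarrow> finite D \<Longrightarrow> map_left P1 C (p, q) = (\<Sum>\<alpha>\<in>D. P1 (a \<alpha>) p * b \<alpha> q)"
  by (rule ml_eq) (rule P1_lin, assumption+)
lemma X2: "{\<alpha>. dk \<alpha> = degB q} \<subseteq> D \<Longrightarrow> finite D \<Longrightarrow> map_left P2 C (p, q) = (\<Sum>\<alpha>\<in>D. P2 (a \<alpha>) p * b \<alpha> q)"
  by (rule ml_eq) (rule P2_lin, assumption+)

lemma stepC:
  fixes i :: 'i and j :: 'j
  defines "DL \<equiv> {\<alpha>. dk \<alpha> \<le> degB j}"
  shows "cmul mA mB (map_left P1 C) (map_left P2 C) (i, j) =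
    (\<Sum>ab\<in>DL \<times> DL. mulc mA (P1 (a (fst ab))) (P2 (a (snd ab))) i * mulc mB (b (fst ab)) (b (snd ab)) j)"
proof -
  let ?P = "{p. mA (fst p) (snd p) i \<noteq> 0}" and ?Q = "{q. mB (fst q) (snd q) j \<noteq> 0}"
  have fP: "finite ?P" by (rule gb_fin_mset[OF bialgA])
  have fQ: "finite ?Q" by (rule gb_fin_mset[OF bialgB])
  have fD: "finite DL" unfolding DL_def by (rule dfin_le)
  have qd: "degB (fst q) \<le> degB j" "degB (snd q) \<le> degB j" if "q \<in> ?Q" for q
    using gb_m[OF bialgB, of "fst q" "snd q" j] that by auto
  let ?T = "\<lambda>p q ab. P1 (a (fst ab)) (fst p) * P2 (a (snd ab)) (snd p) * mA (fst p) (snd p) i *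
                   (b (fst ab) (fst q) * b (snd ab) (snd q) * mB (fst q) (snd q) j)"
  have "cmul mA mB (map_left P1 C) (map_left P2 C) (i, j) =
     (\<Sum>p\<in>?P. \<Sum>q\<in>?Q. map_left P1 C (fst p, fst q) * map_left P2 C (snd p, snd q) * mA (fst p) (snd p) i * mB (fst q) (snd q) j)"
    by (simp add: cmul_def)
  also have "\<dots> = (\<Sum>p\<in>?P. \<Sum>q\<in>?Q. \<Sum>ab\<in>DL \<times> DL. ?T p q ab)"
  proof (rule sum.cong[OF refl], rule sum.cong[OF refl])
    fix p q assume q: "q \<in> ?Q"
    have s1: "{\<alpha>. dk \<alpha> = degB (fst q)} \<subseteq> DL" "{\<alpha>. dk \<alpha> = degB (snd q)} \<subseteq> DL"
      using qd[OF q] by (auto simp: DL_def)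
    show "map_left P1 C (fst p, fst q) * map_left P2 C (snd p, snd q) * mA (fst p) (snd p) i * mB (fst q) (snd q) j
       = (\<Sum>ab\<in>DL \<times> DL. ?T p q ab)"
      unfolding X1[OF s1(1) fD] X2[OF s1(2) fD] sum_product sum.cartesian_product
      by (simp add: sum_distrib_right sum_distrib_left split_def ac_simps)
  qed
  also have "\<dots> = (\<Sum>p\<in>?P. \<Sum>ab\<in>DL \<times> DL. \<Sum>q\<in>?Q. ?T p q ab)"
    by (rule sum.cong[OF refl], rule sum.swap)
  also have "\<dots> = (\<Sum>ab\<in>DL \<times> DL. \<Sum>p\<in>?P. \<Sum>q\<in>?Q. ?T p q ab)"
    by (rule sum.swap)
  also have "\<dots> = (\<Sum>ab\<in>DL \<times> DL. mulc mA (P1 (a (fst ab))) (P2 (a (snd ab))) i * mulc mB (b (fst ab)) (b (snd ab)) j)"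
  proof (rule sum.cong[OF refl])
    fix ab
    show "(\<Sum>p\<in>?P. \<Sum>q\<in>?Q. ?T p q ab) = mulc mA (P1 (a (fst ab))) (P2 (a (snd ab))) i * mulc mB (b (fst ab)) (b (snd ab)) j"
      apply (subst mulc_set[OF P1_fs[OF afs] P2_fs[OF afs] fP], simp)
      apply (subst mulc_set[OF bfs bfs fQ], simp)
      apply (simp add: sum_product)
      done
  qed
  finally show ?thesis .
qed

end

lemma pairing_delta:
  "pairing pr (delta k) y = (\<Sum>q\<in>{q. y q \<noteq> 0}. y q * pr k q)"
proof -
  have "{i. delta k i \<noteq> 0} = {k}" by (auto simp: delta_def)
  thus ?thesis by (simp add: pairing_def delta_def)
qed

lemma pairing2_tensor:
  "pairing2 pr t (tensor y1 y2) =
     (\<Sum>p\<in>{p. t p \<noteq> 0}. t p * (pairing pr (delta (fst p)) y1 * pairing pr (delta (snd p)) y2))"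
  unfolding pairing2_def pairing_delta supp_tensor sum_product
  by (rule sum.cong[OF refl]) (simp add: sum.cartesian_product' sum_distrib_left tensor_def ac_simps)

context mainloc
begin

abbreviation "pd k \<alpha> \<equiv> pairing pr (delta k) (b \<alpha>)"

lemma H_eq:
  "pairing pr (a \<gamma>) (mulc mB (b \<alpha>) (b \<beta>)) =
    (\<Sum>p\<in>{p. comulc dA (a \<gamma>) p \<noteq> 0}. comulc dA (a \<gamma>) p * (pd (fst p) \<alpha> * pd (snd p) \<beta>))"
  using pair_mult afs bfs by (simp add: pairing2_tensor)

lemma pairing_nz:
  assumes "pairing pr x y \<noteq> 0"
  obtains i j where "x i \<noteq> 0" "y j \<noteq> 0" "pr i j \<noteq> 0"
  using assms unfolding pairing_def by (auto elim!: sum.not_neutral_contains_not_neutral)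

lemma dual1_DN:
  assumes y: "fsupp y"
  shows "y j = (\<Sum>\<gamma>\<in>{\<gamma>. dk \<gamma> = degB j}. pairing pr (a \<gamma>) y * b \<gamma> j)"
proof -
  let ?S = "{\<alpha>. pairing pr (a \<alpha>) y \<noteq> 0}"
  have sub: "?S \<subseteq> (\<Union>j'\<in>{j. y j \<noteq> 0}. {\<gamma>. dk \<gamma> = degB j'})"
  proof
    fix \<gamma> assume "\<gamma> \<in> ?S"
    then obtain i' j' where "a \<gamma> i' \<noteq> 0" "y j' \<noteq> 0" "pr i' j' \<noteq> 0" by (auto elim: pairing_nz)
    thus "\<gamma> \<in> (\<Union>j'\<in>{j. y j \<noteq> 0}. {\<gamma>. dk \<gamma> = degB j'})" using adeg prdeg by force
  qed
  have fS: "finite ?S" by (rule rev_finite_subset[OF _ sub]) (use y dfin in \<open>auto simp: fsupp_def\<close>)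
  have "y j = (\<Sum>\<alpha>\<in>?S. pairing pr (a \<alpha>) y * b \<alpha> j)" using fun_cong[OF dual1[OF y], of j] by simp
  also have "\<dots> = Sum_any (\<lambda>\<alpha>. pairing pr (a \<alpha>) y * b \<alpha> j)" by (rule SA_eq[symmetric, OF fS]) auto
  also have "\<dots> = (\<Sum>\<gamma>\<in>{\<gamma>. dk \<gamma> = degB j}. pairing pr (a \<gamma>) y * b \<gamma> j)"
    by (rule SA_eq[OF dfin]) (use bdeg in force)
  finally show ?thesis .
qed

lemma dual2_delta:
  assumes "degA k \<le> N"
  shows "delta k = lc {\<alpha>. dk \<alpha> \<le> N} (\<lambda>\<alpha>. pd k \<alpha>) a"
proof
  fix i
  let ?S = "{\<alpha>. pd k \<alpha> \<noteq> 0}" and ?D = "{\<alpha>. dk \<alpha> \<le> N}"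
  have sub: "?S \<subseteq> ?D"
  proof
    fix \<alpha> assume "\<alpha> \<in> ?S"
    then obtain i' j' where "delta k i' \<noteq> 0" "b \<alpha> j' \<noteq> 0" "pr i' j' \<noteq> 0" by (auto elim: pairing_nz)
    thus "\<alpha> \<in> ?D" using bdeg prdeg assms by (force simp: delta_def split: if_splits)
  qed
  have "delta k i = (\<Sum>\<alpha>\<in>?S. a \<alpha> i * pd k \<alpha>)" using fun_cong[OF dual2[OF fs_delta], of i] by simp
  also have "\<dots> = (\<Sum>\<alpha>\<in>?D. a \<alpha> i * pd k \<alpha>)"
    by (rule sum.mono_neutral_left[OF dfin_le sub]) auto
  finally show "delta k i = lc ?D (\<lambda>\<alpha>. pd k \<alpha>) a i" by (simp add: lc_def ac_simps)
qed

lemma G: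
  assumes "degA k \<le> N" "degA l \<le> N"
  defines "DL \<equiv> {\<alpha>. dk \<alpha> \<le> N}"
  shows "(\<Sum>ab\<in>DL \<times> DL. mulc mA (P1 (a (fst ab))) (P2 (a (snd ab))) i * (pd k (fst ab) * pd l (snd ab)))
     = Mk mA eA A1 A2 (k, l) i"
proof -
  have fD: "finite DL" unfolding DL_def by (rule dfin_le)
  have fl: "fsupp (lc DL (pd l) (\<lambda>\<beta>. P2 (a \<beta>)))" by (rule fs_lc[OF fD]) (simp add: P2_fs afs)
  have "Mk mA eA A1 A2 (k, l) i = mulc mA (P1 (lc DL (pd k) a)) (P2 (lc DL (pd l) a)) i"
    unfolding Mk_def DL_def using dual2_delta[OF assms(1)] dual2_delta[OF assms(2)] by simp
  also have "\<dots> = mulc mA (lc DL (pd k) (\<lambda>\<alpha>. P1 (a \<alpha>))) (lc DL (pd l) (\<lambda>\<beta>. P2 (a \<beta>))) i"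
    by (subst P1_lin[OF fD], simp add: afs, subst P2_lin[OF fD], simp add: afs, rule refl)
  also have "\<dots> = lc DL (pd k) (\<lambda>\<alpha>. mulc mA (P1 (a \<alpha>)) (lc DL (pd l) (\<lambda>\<beta>. P2 (a \<beta>)))) i"
    by (subst mulc_lc_left[OF fl fD]) (auto simp: P1_fs afs)
  also have "\<dots> = lc DL (pd k) (\<lambda>\<alpha>. lc DL (pd l) (\<lambda>\<beta>. mulc mA (P1 (a \<alpha>)) (P2 (a \<beta>)))) i"
    unfolding lc_def[of DL "pd k"]
    by (rule sum.cong[OF refl], subst mulc_lc_right[OF P1_fs[OF afs] fD]) (auto simp: P2_fs afs)
  also have "\<dots> = (\<Sum>ab\<in>DL \<times> DL. mulc mA (P1 (a (fst ab))) (P2 (a (snd ab))) i * (pd k (fst ab) * pd l (snd ab)))"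
    by (simp add: lc_def sum.cartesian_product' sum_distrib_left ac_simps)
  finally show ?thesis by simp
qed

lemma E2:
  assumes "dk \<gamma> \<le> N"
  defines "DL \<equiv> {\<alpha>. dk \<alpha> \<le> N}"
  shows "(\<Sum>ab\<in>DL \<times> DL. mulc mA (P1 (a (fst ab))) (P2 (a (snd ab))) i *
           pairing pr (a \<gamma>) (mulc mB (b (fst ab)) (b (snd ab)))) = a \<gamma> i"
proof -
  let ?S = "{p. comulc dA (a \<gamma>) p \<noteq> 0}"
  let ?F = "\<lambda>ab. mulc mA (P1 (a (fst ab))) (P2 (a (snd ab))) i"
  have fS: "finite ?S" using comulc_fs[OF bialgA afs] by (simp add: fsupp_def)
  have pdeg: "degA (fst p) \<le> N \<and> degA (snd p) \<le> N" if "p \<in> ?S" for p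
  proof -
    have nz: "comulc dA (a \<gamma>) p \<noteq> 0" using that by simp
    obtain i' where "a \<gamma> i' \<noteq> 0" "dA i' (fst p) (snd p) \<noteq> 0"
      using nz unfolding comulc_def split_beta by (auto elim!: sum.not_neutral_contains_not_neutral)
    thus ?thesis using adeg gb_d[OF bialgA] assms(1) by force
  qed
  have "(\<Sum>ab\<in>DL \<times> DL. ?F ab * pairing pr (a \<gamma>) (mulc mB (b (fst ab)) (b (snd ab))))
      = (\<Sum>ab\<in>DL \<times> DL. \<Sum>p\<in>?S. ?F ab * (comulc dA (a \<gamma>) p * (pd (fst p) (fst ab) * pd (snd p) (snd ab))))"
    by (simp add: H_eq sum_distrib_left)
  also have "\<dots> = (\<Sum>p\<in>?S. \<Sum>ab\<in>DL \<times> DL. ?F ab * (comulc dA (a \<gamma>) p * (pd (fst p) (fst ab) * pd (snd p) (snd ab))))"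
    by (rule sum.swap)
  also have "\<dots> = (\<Sum>p\<in>?S. comulc dA (a \<gamma>) p * Mk mA eA A1 A2 p i)"
  proof (rule sum.cong[OF refl])
    fix p assume p: "p \<in> ?S"
    have "Mk mA eA A1 A2 p i = (\<Sum>ab\<in>DL \<times> DL. ?F ab * (pd (fst p) (fst ab) * pd (snd p) (snd ab)))"
      using G[of "fst p" N "snd p" i] pdeg[OF p] unfolding DL_def by simp
    thus "(\<Sum>ab\<in>DL \<times> DL. ?F ab * (comulc dA (a \<gamma>) p * (pd (fst p) (fst ab) * pd (snd p) (snd ab))))
        = comulc dA (a \<gamma>) p * Mk mA eA A1 A2 p i"
      by (simp add: sum_distrib_left ac_simps)
  qed
  also have "\<dots> = Ph (comulc dA (a \<gamma>)) i"
    unfolding Phi_def by (rule supp_SA[OF fS])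
  also have "\<dots> = a \<gamma> i" by (simp add: K afs)
  finally show ?thesis .
qed

theorem main: "C = cmul mA mB (map_left P1 C) (map_left P2 C)"
proof (rule ext, clarify)
  fix i j
  let ?N = "degB j"
  let ?DL = "{\<alpha>. dk \<alpha> \<le> ?N}" and ?DN = "{\<gamma>. dk \<gamma> = ?N}"
  let ?F = "\<lambda>ab. mulc mA (P1 (a (fst ab))) (P2 (a (snd ab))) i"
  let ?H = "\<lambda>\<gamma> ab. pairing pr (a \<gamma>) (mulc mB (b (fst ab)) (b (snd ab)))"
  have "cmul mA mB (map_left P1 C) (map_left P2 C) (i, j) =
      (\<Sum>ab\<in>?DL \<times> ?DL. ?F ab * mulc mB (b (fst ab)) (b (snd ab)) j)"
    by (rule stepC)
  also have "\<dots> = (\<Sum>ab\<in>?DL \<times> ?DL. \<Sum>\<gamma>\<in>?DN. ?F ab * (?H \<gamma> ab * b \<gamma> j))"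
    apply (rule sum.cong[OF refl])
    apply (subst dual1_DN[OF mulc_fs[OF bialgB bfs bfs]])
    apply (simp add: sum_distrib_left)
    done
  also have "\<dots> = (\<Sum>\<gamma>\<in>?DN. \<Sum>ab\<in>?DL \<times> ?DL. ?F ab * (?H \<gamma> ab * b \<gamma> j))"
    by (rule sum.swap)
  also have "\<dots> = (\<Sum>\<gamma>\<in>?DN. a \<gamma> i * b \<gamma> j)"
  proof (rule sum.cong[OF refl])
    fix \<gamma> assume g: "\<gamma> \<in> ?DN"
    have "(\<Sum>ab\<in>?DL \<times> ?DL. ?F ab * ?H \<gamma> ab) = a \<gamma> i" using E2[of \<gamma> ?N i] g by simp
    thus "(\<Sum>ab\<in>?DL \<times> ?DL. ?F ab * (?H \<gamma> ab * b \<gamma> j)) = a \<gamma> i * b \<gamma> j"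
      by (simp add: sum_distrib_right[symmetric] mult.assoc[symmetric])
  qed
  also have "\<dots> = C (i, j)" by (rule canon_set[symmetric, OF dfin]) simp
  finally show "C (i, j) = cmul mA mB (map_left P1 C) (map_left P2 C) (i, j)" by simp
qed

end

theorem mainTheorem10:
  fixes degA :: "'i \<Rightarrow> nat" and mA :: "'i \<Rightarrow> 'i \<Rightarrow> 'i \<Rightarrow> complex"
    and uA :: "'i \<Rightarrow> complex" and dA :: "'i \<Rightarrow> 'i \<Rightarrow> 'i \<Rightarrow> complex" and eA :: "'i \<Rightarrow> complex"
    and degB :: "'j \<Rightarrow> nat" and mB :: "'j \<Rightarrow> 'j \<Rightarrow> 'j \<Rightarrow> complex"
    and uB :: "'j \<Rightarrow> complex" and dB :: "'j \<Rightarrow> 'j \<Rightarrow> 'j \<Rightarrow> complex" and eB :: "'j \<Rightarrow> complex"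
    and pr :: "'i \<Rightarrow> 'j \<Rightarrow> complex"
    and A1 A2 :: "('i \<Rightarrow> complex) set"
    and dk :: "'k \<Rightarrow> nat" and a :: "'k \<Rightarrow> 'i \<Rightarrow> complex" and b :: "'k \<Rightarrow> 'j \<Rightarrow> complex"
  assumes bialgA: "graded_bialgebra degA mA uA dA eA"
    and bialgB: "graded_bialgebra degB mB uB dB eB"
    and sub1: "subalgebra mA uA A1"
    and sub2: "subalgebra mA uA A2"
    and fact: "bij_betw (mult_map mA) (tspan A1 A2) {x. fsupp x}"
    and cop1: "\<forall>x\<in>A1. comulc dA x \<in> tspan {y. fsupp y} A1"
    and cop2: "\<forall>x\<in>A2. comulc dA x \<in> tspan A2 {y. fsupp y}"
    and pairing: "graded_nondeg_pairing degA degB pr"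
    and pair_mult: "\<forall>x y1 y2. fsupp x \<longrightarrow> fsupp y1 \<longrightarrow> fsupp y2 \<longrightarrow>
                     pairing pr x (mulc mB y1 y2) = pairing2 pr (comulc dA x) (tensor y1 y2)"
    and pair_comult: "\<forall>x1 x2 y. fsupp x1 \<longrightarrow> fsupp x2 \<longrightarrow> fsupp y \<longrightarrow>
                     pairing pr (mulc mA x1 x2) y = pairing2 pr (tensor x2 x1) (comulc dB y)"
    and dual: "dual_bases degA degB pr dk a b"
  shows "canon a b =
         cmul mA mB (map_left (Pi1 mA eA A1 A2) (canon a b))
                    (map_left (Pi2 mA eA A1 A2) (canon a b))"
proof -
  interpret mainloc degA mA uA dA eA A1 A2 degB mB uB dB eB pr dk a b
    by unfold_locales (use assms in auto)
  show ?thesis by (rule main)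
qed

end
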